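(* Let $Z\subset\mathbb{R}^3$ be a $3$-dimensional zonotope with $n$ generators. Then $Z+t_Z$ is a $(2n+3)$-equiprojective polytope.
   Context: Up to translation, a zonotope is $\sum_{g\in\mathcal{G}}\mathrm{conv}\{0,g\}$ for a finite non-empty set $\mathcal{G}$ of pairwise non-collinear non-zero vectors; $|\mathcal{G}|$ is the number of generators. A vector $u\in\mathbb{S}^2$ is an edge direction of a polytope $P\subset\mathbb{R}^3$ when its first non-zero coordinate is positive and some edge of $P$ has difference of vertices a multiple of $u$. For each $3$-dimensional zonotope $Z$, $t_Z$ is a fixed triangle in $\mathbb{R}^3$ such that no edge direction of $t_Z$ lies in a plane spanned by two edge directions of $Z$, and no edge direction of $Z$ lies in the plane spanned by the edge directions of $t_Z$ (in particular $Z$ and $t_Z$ share no edge direction). A $3$-dimensional polytope is $k$-equiprojective when its orthogonal projection onto any plane not orthogonal to one of its facets is a polygon with exactly $k$ vertices. *)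

theory Defs
  imports "HOL-Analysis.Analysis"
begin

type_synonym vec3 = "real ^ 3"

definition zonotope_gen :: "vec3 set \<Rightarrow> vec3 set" where
  "zonotope_gen G = {(\<Sum>g\<in>G. c g *\<^sub>R g) | c. \<forall>g\<in>G. 0 \<le> c g \<and> c g \<le> 1}"

definition generator_set :: "vec3 set \<Rightarrow> bool" where
  "generator_set G \<longleftrightarrow> finite G \<and> G \<noteq> {} \<and> 0 \<notin> G \<and>
     (\<forall>g\<in>G. \<forall>h\<in>G. g \<noteq> h \<longrightarrow> \<not> collinear {0, g, h})"

definition zonotope_with_gens :: "vec3 set \<Rightarrow> vec3 set \<Rightarrow> bool" where
  "zonotope_with_gens Z G \<longleftrightarrow> generator_set G \<and> (\<exists>a. Z = (\<lambda>x. a + x) ` zonotope_gen G)"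

definition first_nonzero_pos :: "vec3 \<Rightarrow> bool" where
  "first_nonzero_pos u \<longleftrightarrow> u$1 > 0 \<or> (u$1 = 0 \<and> u$2 > 0) \<or> (u$1 = 0 \<and> u$2 = 0 \<and> u$3 > 0)"

definition edge_direction :: "vec3 \<Rightarrow> vec3 set \<Rightarrow> bool" where
  "edge_direction u P \<longleftrightarrow> norm u = 1 \<and> first_nonzero_pos u \<and>
     (\<exists>e a b c. e edge_of P \<and> a extreme_point_of P \<and> b extreme_point_of P \<and>
        a \<in> e \<and> b \<in> e \<and> a \<noteq> b \<and> b - a = c *\<^sub>R u)"

definition edge_dirs :: "vec3 set \<Rightarrow> vec3 set" where
  "edge_dirs P = {u. edge_direction u P}"

definition triangle :: "vec3 set \<Rightarrow> bool" where
  "triangle t \<longleftrightarrow> (\<exists>a b c. \<not> collinear {a, b, c} \<and> t = convex hull {a, b, c})"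

definition generic_triangle_for :: "vec3 set \<Rightarrow> vec3 set \<Rightarrow> bool" where
  "generic_triangle_for Z t \<longleftrightarrow> triangle t \<and>
     (\<forall>w\<in>edge_dirs t. \<forall>u\<in>edge_dirs Z. \<forall>v\<in>edge_dirs Z. u \<noteq> v \<longrightarrow> w \<notin> span {u, v}) \<and>
     (\<forall>u\<in>edge_dirs Z. u \<notin> span (edge_dirs t))"

definition minkowski_sum :: "vec3 set \<Rightarrow> vec3 set \<Rightarrow> vec3 set" where
  "minkowski_sum A B = {x + y | x y. x \<in> A \<and> y \<in> B}"

definition proj_plane :: "vec3 \<Rightarrow> vec3 \<Rightarrow> vec3" where
  "proj_plane d x = x - ((x \<bullet> d) / (d \<bullet> d)) *\<^sub>R d"

text \<open>The plane with normal d is orthogonal to facet F iff d is parallel to F,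
  i.e. d lies in the linear space of directions of F.\<close>
definition plane_orth_facet :: "vec3 \<Rightarrow> vec3 set \<Rightarrow> bool" where
  "plane_orth_facet d F \<longleftrightarrow> d \<in> span {x - y | x y. x \<in> F \<and> y \<in> F}"

definition equiprojective :: "nat \<Rightarrow> vec3 set \<Rightarrow> bool" where
  "equiprojective k P \<longleftrightarrow> polytope P \<and> aff_dim P = 3 \<and>
     (\<forall>d. d \<noteq> 0 \<and> (\<forall>F. F facet_of P \<longrightarrow> \<not> plane_orth_facet d F) \<longrightarrow>
        (let Q = proj_plane d ` P in
           polytope Q \<and> aff_dim Q = 2 \<and> card {v. v extreme_point_of Q} = k))"

end

theory Submission
  imports Defs "HOL-Analysis.Cross3"
begin

unbundle cross3_syntax

definition umax :: "vec3 set \<Rightarrow> vec3 \<Rightarrow> vec3 \<Rightarrow> bool" where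
  "umax K \<psi> k \<longleftrightarrow> k \<in> K \<and> (\<forall>y\<in>K. y \<noteq> k \<longrightarrow> \<psi> \<bullet> y < \<psi> \<bullet> k)"

definition segsum :: "vec3 set \<Rightarrow> vec3 \<Rightarrow> vec3 set" where
  "segsum K v = {y + c *\<^sub>R v | y c. y \<in> K \<and> 0 \<le> c \<and> c \<le> 1}"

lemma umax_unique: "umax K \<psi> k \<Longrightarrow> umax K \<psi> k' \<Longrightarrow> k = k'"
  unfolding umax_def by force

lemma umax_scale: "umax K \<psi> k \<Longrightarrow> c > 0 \<Longrightarrow> umax K (c *\<^sub>R \<psi>) k"
  unfolding umax_def by auto

lemma umax_extreme:
  assumes "umax K \<psi> k" shows "k extreme_point_of K"
  unfolding extreme_point_of_def
proof (intro conjI ballI)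
  show "k \<in> K" using assms umax_def by blast
  fix a b assume ab: "a \<in> K" "b \<in> K"
  show "k \<notin> open_segment a b"
  proof
    assume k: "k \<in> open_segment a b"
    then have "a \<noteq> b" by auto
    from k obtain u where u: "0 < u" "u < 1" "k = (1 - u) *\<^sub>R a + u *\<^sub>R b"
      by (auto simp: in_segment)
    have "k \<noteq> a \<or> k \<noteq> b" using \<open>a \<noteq> b\<close> by blast
    have le: "\<psi> \<bullet> y \<le> \<psi> \<bullet> k" if "y \<in> K" for y
      using assms that unfolding umax_def by (cases "y = k") (auto intro: less_imp_le)
    have ea: "\<psi> \<bullet> a \<le> \<psi> \<bullet> k" "\<psi> \<bullet> b \<le> \<psi> \<bullet> k" using le ab by auto
    have eq: "\<psi> \<bullet> k = (1 - u) * (\<psi> \<bullet> a) + u * (\<psi> \<bullet> b)" using u(3) by (simp add: inner_add_right)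
    show False
    proof (cases "k \<noteq> a")
      case True
      then have "\<psi> \<bullet> a < \<psi> \<bullet> k" using assms ab unfolding umax_def by (metis)
      then have "(1 - u) * (\<psi> \<bullet> a) < (1 - u) * (\<psi> \<bullet> k)" using u by simp
      moreover have "u * (\<psi> \<bullet> b) \<le> u * (\<psi> \<bullet> k)" using ea u by (simp add: mult_left_mono)
      ultimately show False using eq by (simp add: algebra_simps)
    next
      case False
      then have "k \<noteq> b" using \<open>a \<noteq> b\<close> by blast
      then have "\<psi> \<bullet> b < \<psi> \<bullet> k" using assms ab unfolding umax_def by (metis)
      then have "u * (\<psi> \<bullet> b) < u * (\<psi> \<bullet> k)" using u by simp
      moreover have "(1 - u) * (\<psi> \<bullet> a) \<le> (1 - u) * (\<psi> \<bullet> k)" using ea u by (simp add: mult_left_mono)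
      ultimately show False using eq by (simp add: algebra_simps)
    qed
  qed
qed

lemma extreme_umax:
  assumes "polytope K" "k extreme_point_of K"
  shows "\<exists>\<psi>. umax K \<psi> k"
proof -
  have "{k} face_of K" using assms(2) face_of_singleton by blast
  then have "{k} exposed_face_of K"
    using assms(1) exposed_face_of_polyhedron polytope_imp_polyhedron by blast
  then obtain a b where ab: "K \<subseteq> {x. a \<bullet> x \<le> b}" "{k} = K \<inter> {x. a \<bullet> x = b}"
    unfolding exposed_face_of_def by blast
  have "umax K a k"
    unfolding umax_def
  proof (intro conjI ballI impI)
    show "k \<in> K" using ab(2) by blast
    have "a \<bullet> k = b" using ab(2) by blast
    fix y assume "y \<in> K" "y \<noteq> k"
    then have "a \<bullet> y \<noteq> b" using ab(2) by blast
    then show "a \<bullet> y < a \<bullet> k" using ab(1) \<open>y \<in> K\<close> \<open>a \<bullet> k = b\<close> by force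
  qed
  then show ?thesis by blast
qed

lemma umax_hull:
  assumes "finite E" "k \<in> E" "\<And>e. e \<in> E \<Longrightarrow> e \<noteq> k \<Longrightarrow> \<psi> \<bullet> e < \<psi> \<bullet> k"
  shows "umax (convex hull E) \<psi> k"
  unfolding umax_def
proof (intro conjI ballI impI)
  show "k \<in> convex hull E" by (rule hull_inc[OF assms(2)])
  fix y assume y: "y \<in> convex hull E" "y \<noteq> k"
  then obtain u where u: "\<forall>x\<in>E. 0 \<le> u x" "sum u E = 1" "(\<Sum>x\<in>E. u x *\<^sub>R x) = y"
    using y(1) unfolding convex_hull_finite[OF assms(1)] mem_Collect_eq by (elim exE conjE) (rule that)
  have "\<exists>e\<in>E. e \<noteq> k \<and> u e > 0"
  proof (rule ccontr)
    assume "\<not> ?thesis"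
    then have z: "\<forall>e\<in>E. e \<noteq> k \<longrightarrow> u e = 0" using u(1) by force
    then have "sum u E = u k" using assms(1,2) by (simp add: sum.remove)
    moreover have "(\<Sum>x\<in>E. u x *\<^sub>R x) = u k *\<^sub>R k" using z assms(1,2) by (simp add: sum.remove)
    ultimately show False using u y by simp
  qed
  then obtain e where e: "e \<in> E" "e \<noteq> k" "u e > 0" by blast
  have "\<psi> \<bullet> y = (\<Sum>x\<in>E. u x * (\<psi> \<bullet> x))" using u(3) by (auto simp: inner_sum_right)
  also have "\<dots> < (\<Sum>x\<in>E. u x * (\<psi> \<bullet> k))"
  proof (rule sum_strict_mono_ex1[OF assms(1)])
    show "\<forall>x\<in>E. u x * (\<psi> \<bullet> x) \<le> u x * (\<psi> \<bullet> k)"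
    proof
      fix x assume "x \<in> E"
      have "\<psi> \<bullet> x \<le> \<psi> \<bullet> k" using assms(3)[OF \<open>x \<in> E\<close>] by (cases "x = k") auto
      then show "u x * (\<psi> \<bullet> x) \<le> u x * (\<psi> \<bullet> k)" using u(1) \<open>x \<in> E\<close> by (simp add: mult_left_mono)
    qed
    show "\<exists>x\<in>E. u x * (\<psi> \<bullet> x) < u x * (\<psi> \<bullet> k)" using e assms(3)[OF e(1,2)] by (intro bexI[of _ e]) auto
  qed
  also have "\<dots> = \<psi> \<bullet> k" using u(2) by (simp add: sum_distrib_right[symmetric])
  finally show "\<psi> \<bullet> y < \<psi> \<bullet> k" .
qed

lemma umax_segsum_pos:
  assumes "umax K \<psi> k" "\<psi> \<bullet> v > 0"
  shows "umax (segsum K v) \<psi> (k + v)"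
  unfolding umax_def
proof (intro conjI ballI impI)
  have k: "k \<in> K" using assms unfolding umax_def by blast
  then show "k + v \<in> segsum K v" unfolding segsum_def by (intro CollectI exI[of _ k] exI[of _ 1]) auto
  fix x assume x: "x \<in> segsum K v" "x \<noteq> k + v"
  then obtain y c where y: "x = y + c *\<^sub>R v" "y \<in> K" "0 \<le> c" "c \<le> 1" unfolding segsum_def by blast
  show "\<psi> \<bullet> x < \<psi> \<bullet> (k + v)"
  proof (cases "y = k")
    case True
    then have "c \<noteq> 1" using x y by auto
    then have "c < 1" using y by auto
    then have "c * (\<psi> \<bullet> v) < \<psi> \<bullet> v" using assms(2) by simp
    then show ?thesis using y True by (simp add: inner_add_right)
  next
    case False
    then have "\<psi> \<bullet> y < \<psi> \<bullet> k" using assms(1) y(2) unfolding umax_def by blast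
    moreover have "c * (\<psi> \<bullet> v) \<le> \<psi> \<bullet> v" using assms(2) y by (simp add: mult_left_le_one_le)
    ultimately show ?thesis using y by (simp add: inner_add_right)
  qed
qed

lemma umax_segsum_neg:
  assumes "umax K \<psi> k" "\<psi> \<bullet> v < 0"
  shows "umax (segsum K v) \<psi> k"
  unfolding umax_def
proof (intro conjI ballI impI)
  have k: "k \<in> K" using assms unfolding umax_def by blast
  then show "k \<in> segsum K v" unfolding segsum_def by (intro CollectI exI[of _ k] exI[of _ 0]) auto
  fix x assume x: "x \<in> segsum K v" "x \<noteq> k"
  then obtain y c where y: "x = y + c *\<^sub>R v" "y \<in> K" "0 \<le> c" "c \<le> 1" unfolding segsum_def by blast
  show "\<psi> \<bullet> x < \<psi> \<bullet> k"
  proof (cases "y = k")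
    case True
    then have "c \<noteq> 0" using x y by auto
    then have "c > 0" using y by auto
    then have "c * (\<psi> \<bullet> v) < 0" using assms(2) by (simp add: mult_pos_neg)
    then show ?thesis using y True by (simp add: inner_add_right)
  next
    case False
    then have "\<psi> \<bullet> y < \<psi> \<bullet> k" using assms(1) y(2) unfolding umax_def by blast
    moreover have "c * (\<psi> \<bullet> v) \<le> 0" using assms(2) y by (simp add: mult_nonneg_nonpos)
    ultimately show ?thesis using y by (simp add: inner_add_right)
  qed
qed

lemma segsum_eq_plus: "segsum K v = K + closed_segment 0 v"
  unfolding segsum_def set_plus_def closed_segment_def by auto

lemma polytope_segsum:
  assumes "polytope K" shows "polytope (segsum K v)"
proof -
  obtain V where V: "finite V" "K = convex hull V" using assms polytope_def by blast
  have "segsum K v = convex hull V + convex hull {0, v}"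
    by (simp add: segsum_eq_plus V segment_convex_hull)
  also have "\<dots> = convex hull (V + {0, v})" by (simp add: convex_hull_set_plus)
  finally show ?thesis using V(1) by (simp add: polytope_convex_hull finite_set_plus)
qed

lemma segsum_sub_plane:
  assumes "K \<subseteq> {x. x \<bullet> d = 0}" "v \<bullet> d = 0"
  shows "segsum K v \<subseteq> {x. x \<bullet> d = 0}"
  using assms unfolding segsum_def by (auto simp: inner_add_left)

lemma umax_perturb:
  assumes "finite E" "umax (convex hull E) \<psi> k"
  shows "\<exists>\<epsilon>>0. \<forall>s. \<bar>s\<bar> \<le> \<epsilon> \<longrightarrow> umax (convex hull E) (\<psi> + s *\<^sub>R v) k"
proof -
  have kE: "k \<in> E"
  proof (rule ccontr)
    assume "k \<notin> E"
    have "E \<subseteq> {x. \<psi> \<bullet> x < \<psi> \<bullet> k}"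
    proof
      fix e assume "e \<in> E"
      then have "e \<in> convex hull E" by (rule hull_inc)
      then show "e \<in> {x. \<psi> \<bullet> x < \<psi> \<bullet> k}" using assms(2) \<open>k \<notin> E\<close> \<open>e \<in> E\<close> unfolding umax_def by auto
    qed
    then have "convex hull E \<subseteq> {x. \<psi> \<bullet> x < \<psi> \<bullet> k}"
      by (rule hull_minimal) (rule convex_halfspace_lt)
    moreover have "k \<in> convex hull E" using assms(2) unfolding umax_def by blast
    ultimately show False by auto
  qed
  have lt: "\<psi> \<bullet> e < \<psi> \<bullet> k" if "e \<in> E" "e \<noteq> k" for e
    using assms(2) hull_inc[OF that(1)] that(2) unfolding umax_def by blast
  define D where "D = E - {k}"
  show ?thesis
  proof (cases "D = {}")
    case True
    then have "E = {k}" using kE D_def by auto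
    then show ?thesis by (intro exI[of _ 1]) (auto simp: umax_def)
  next
    case False
    define f where "f e = (\<psi> \<bullet> (k - e)) / (\<bar>v \<bullet> (k - e)\<bar> + 1)" for e
    define \<epsilon> where "\<epsilon> = Min (f ` D)"
    have finD: "finite D" using assms(1) D_def by auto
    have fpos: "f e > 0" if "e \<in> D" for e
      using lt[of e] that unfolding f_def D_def by (auto simp: inner_diff_right intro!: divide_pos_pos)
    have epos: "\<epsilon> > 0" unfolding \<epsilon>_def using finD False fpos by (subst Min_gr_iff) auto
    have ele: "\<epsilon> \<le> f e" if "e \<in> D" for e unfolding \<epsilon>_def using finD that by auto
    show ?thesis
    proof (intro exI[of _ \<epsilon>] conjI allI impI epos)
      fix s :: real assume s: "\<bar>s\<bar> \<le> \<epsilon>"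
      show "umax (convex hull E) (\<psi> + s *\<^sub>R v) k"
      proof (rule umax_hull[OF assms(1) kE])
        fix e assume e: "e \<in> E" "e \<noteq> k"
        then have eD: "e \<in> D" using D_def by auto
        let ?a = "\<psi> \<bullet> (k - e)" and ?b = "\<bar>v \<bullet> (k - e)\<bar>"
        have apos: "?a > 0" using lt[OF e] by (simp add: inner_diff_right)
        have "\<bar>s * (v \<bullet> (k - e))\<bar> \<le> \<epsilon> * ?b" using s by (simp add: abs_mult mult_right_mono)
        also have "\<dots> \<le> f e * ?b" using ele[OF eD] by (simp add: mult_right_mono)
        also have "\<dots> < ?a"
        proof -
          have "f e * ?b = ?a * (?b / (?b + 1))" unfolding f_def by simp
          also have "\<dots> < ?a * 1" using apos by (intro mult_strict_left_mono) auto
          finally show ?thesis by simp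
        qed
        finally have "\<bar>s * (v \<bullet> (k - e))\<bar> < ?a" .
        then have "0 < ?a + s * (v \<bullet> (k - e))" by linarith
        then show "(\<psi> + s *\<^sub>R v) \<bullet> e < (\<psi> + s *\<^sub>R v) \<bullet> k"
          by (simp add: inner_diff_right inner_add_left algebra_simps)
      qed
    qed
  qed
qed

lemma perp_both_cross:
  fixes x a b :: vec3
  assumes "x \<bullet> a = 0" "x \<bullet> b = 0" "x \<noteq> 0"
  shows "\<exists>c. a \<times> b = c *\<^sub>R x"
proof -
  have "x \<times> (a \<times> b) = 0" using assms by (simp add: Lagrange)
  then have "collinear {0, x, a \<times> b}" by (simp add: cross_eq_0)
  then show ?thesis using assms(3) by (auto simp: collinear_lemma)
qed

lemma perp_multiple:
  fixes \<psi> d v :: vec3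
  assumes "\<psi> \<bullet> d = 0" "\<psi> \<bullet> v = 0" "d \<times> v \<noteq> 0"
  shows "\<exists>c. \<psi> = c *\<^sub>R (d \<times> v)"
proof (cases "\<psi> = 0")
  case True then show ?thesis by (intro exI[of _ 0]) simp
next
  case False
  then obtain c where c: "d \<times> v = c *\<^sub>R \<psi>" using perp_both_cross assms by blast
  then have "c \<noteq> 0" using assms(3) by auto
  then show ?thesis using c by (intro exI[of _ "1/c"]) simp
qed

lemma projH_inner:
  fixes d \<psi> y :: vec3
  assumes "y \<bullet> d = 0"
  shows "(\<psi> - ((\<psi> \<bullet> d) / (d \<bullet> d)) *\<^sub>R d) \<bullet> y = \<psi> \<bullet> y"
proof -
  have "d \<bullet> y = 0" using assms by (simp add: inner_commute)
  then show ?thesis by (simp add: inner_diff_left)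
qed

lemma projH_perp:
  fixes d \<psi> :: vec3
  assumes "d \<noteq> 0"
  shows "(\<psi> - ((\<psi> \<bullet> d) / (d \<bullet> d)) *\<^sub>R d) \<bullet> d = 0"
  using assms by (simp add: inner_diff_left)

lemma umax_projH:
  assumes "umax K \<psi> k" "K \<subseteq> {x. x \<bullet> d = 0}"
  shows "umax K (\<psi> - ((\<psi> \<bullet> d) / (d \<bullet> d)) *\<^sub>R d) k"
proof -
  have "\<And>y. y \<in> K \<Longrightarrow> (\<psi> - ((\<psi> \<bullet> d) / (d \<bullet> d)) *\<^sub>R d) \<bullet> y = \<psi> \<bullet> y"
    using assms(2) projH_inner by blast
  then show ?thesis using assms(1) unfolding umax_def by (simp cong: ball_cong)
qed

lemma polytope_hull_ext:
  fixes K :: "vec3 set"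
  assumes "polytope K" shows "K = convex hull {x. x extreme_point_of K}"
proof -
  obtain V where V: "finite V" "K = convex hull V" using assms unfolding polytope_def by blast
  show ?thesis unfolding V(2) by (rule Krein_Milman_polytope[OF V(1)])
qed

lemma umax_other:
  assumes "umax K \<psi> k" "y \<in> K" "y \<noteq> k" shows "\<psi> \<noteq> 0"
proof
  assume "\<psi> = 0"
  then show False using assms unfolding umax_def by force
qed

lemma segsumI: "y \<in> K \<Longrightarrow> 0 \<le> c \<Longrightarrow> c \<le> 1 \<Longrightarrow> y + c *\<^sub>R v \<in> segsum K v"
  unfolding segsum_def by blast

lemma step:
  fixes K :: "vec3 set" and d v :: vec3
  assumes polyK: "polytope K" and KH: "K \<subseteq> {x. x \<bullet> d = 0}" and d0: "d \<noteq> 0"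
    and vd: "v \<bullet> d = 0" and v0: "v \<noteq> 0"
    and card2: "card {x. x extreme_point_of K} \<ge> 2"
    and U: "\<And>\<psi>. \<psi> \<bullet> d = 0 \<Longrightarrow> \<psi> \<bullet> v = 0 \<Longrightarrow> \<psi> \<noteq> 0 \<Longrightarrow> \<exists>k. umax K \<psi> k"
  shows "card {x. x extreme_point_of (segsum K v)} = card {x. x extreme_point_of K} + 2"
proof -
  define E where "E = {x. x extreme_point_of K}"
  define E' where "E' = {x. x extreme_point_of (segsum K v)}"
  define \<psi>0 where "\<psi>0 = d \<times> v"
  define A1 where "A1 = {k. \<exists>\<psi>. \<psi> \<bullet> d = 0 \<and> \<psi> \<bullet> v > 0 \<and> umax K \<psi> k}"
  define A0 where "A0 = {k. \<exists>\<psi>. \<psi> \<bullet> d = 0 \<and> \<psi> \<bullet> v < 0 \<and> umax K \<psi> k}"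
  have finE: "finite E" unfolding E_def
    using finite_polyhedron_extreme_points polyK polytope_imp_polyhedron by blast
  have KE: "K = convex hull E" unfolding E_def by (rule polytope_hull_ext[OF polyK])
  have EK: "E \<subseteq> K" unfolding E_def using extreme_point_of_def by blast
  have psi0: "\<psi>0 \<noteq> 0"
  proof
    assume "\<psi>0 = 0"
    then have "collinear {0, d, v}" unfolding \<psi>0_def by (simp add: cross_eq_0)
    then obtain c where "v = c *\<^sub>R d" using d0 v0 by (auto simp: collinear_lemma)
    then have "c * (d \<bullet> d) = 0" using vd by simp
    then have "c = 0" using d0 by simp
    then show False using \<open>v = c *\<^sub>R d\<close> v0 by simp
  qed
  have p0d: "\<psi>0 \<bullet> d = 0" and p0v: "\<psi>0 \<bullet> v = 0" unfolding \<psi>0_def by (simp_all add: dot_cross_self)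
  have mult: "\<exists>c. \<psi> = c *\<^sub>R \<psi>0" if "\<psi> \<bullet> d = 0" "\<psi> \<bullet> v = 0" for \<psi>
    using perp_multiple[OF that] psi0 unfolding \<psi>0_def by blast
  obtain k1 where k1: "umax K \<psi>0 k1" using U[OF p0d p0v psi0] by blast
  obtain k2 where k2: "umax K (- \<psi>0) k2" using U[of "- \<psi>0"] p0d p0v psi0 by auto
  have two: "\<exists>y\<in>K. y \<noteq> k" for k
  proof (rule ccontr)
    assume "\<not> ?thesis"
    then have "E \<subseteq> {k}" using EK by auto
    then have "card E \<le> card {k}" by (intro card_mono) auto
    then have "card E \<le> 1" by simp
    then show False using card2 E_def by simp
  qed
  have k12: "k1 \<noteq> k2"
  proof
    assume "k1 = k2"
    obtain y where y: "y \<in> K" "y \<noteq> k1" using two by blast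
    have "\<psi>0 \<bullet> y < \<psi>0 \<bullet> k1" using k1 y unfolding umax_def by blast
    moreover have "(- \<psi>0) \<bullet> y < (- \<psi>0) \<bullet> k1" using k2 y \<open>k1 = k2\<close> unfolding umax_def by blast
    ultimately show False by simp
  qed
  have pert: "k \<in> A0 \<and> k \<in> A1" if "umax K \<phi> k" "\<phi> \<bullet> d = 0" "\<phi> \<bullet> v = 0" for k \<phi>
  proof -
    have "umax (convex hull E) \<phi> k" using that(1) KE by simp
    from umax_perturb[OF finE this, of v, folded KE] obtain \<epsilon> where
      e: "\<epsilon> > 0" "\<And>s. \<bar>s\<bar> \<le> \<epsilon> \<Longrightarrow> umax K (\<phi> + s *\<^sub>R v) k" by blast
    have vv: "v \<bullet> v > 0" using v0 by simp
    have d1: "(\<phi> + \<epsilon> *\<^sub>R v) \<bullet> d = 0" and d2: "(\<phi> + (-\<epsilon>) *\<^sub>R v) \<bullet> d = 0"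
      using that(2) vd by (simp_all add: inner_add_left inner_diff_left)
    have v1: "(\<phi> + \<epsilon> *\<^sub>R v) \<bullet> v > 0" and v2: "(\<phi> + (-\<epsilon>) *\<^sub>R v) \<bullet> v < 0"
      using e(1) vv that(3) by (simp_all add: inner_add_left inner_diff_left)
    have u1: "umax K (\<phi> + \<epsilon> *\<^sub>R v) k" using e(2)[of \<epsilon>] e(1) by simp
    have u2: "umax K (\<phi> + (-\<epsilon>) *\<^sub>R v) k" using e(2)[of "-\<epsilon>"] e(1) by simp
    have "k \<in> A1" unfolding A1_def using d1 v1 u1 by blast
    moreover have "k \<in> A0" unfolding A0_def using d2 v2 u2 by blast
    ultimately show ?thesis by blast
  qed
  have k1A: "k1 \<in> A0 \<and> k1 \<in> A1" using pert[OF k1 p0d p0v] .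
  have k2A: "k2 \<in> A0 \<and> k2 \<in> A1" using pert[OF k2] p0d p0v by (simp add: inner_minus_left)
  have dsub: "A0 \<inter> A1 \<subseteq> {k1, k2}"
  proof
    fix k assume k: "k \<in> A0 \<inter> A1"
    then obtain \<psi> \<psi>' where ps: "\<psi> \<bullet> d = 0" "\<psi> \<bullet> v > 0" "umax K \<psi> k"
      and ps': "\<psi>' \<bullet> d = 0" "\<psi>' \<bullet> v < 0" "umax K \<psi>' k"
      unfolding A0_def A1_def by blast
    define \<omega> where "\<omega> = (- (\<psi>' \<bullet> v)) *\<^sub>R \<psi> + (\<psi> \<bullet> v) *\<^sub>R \<psi>'"
    have cd: "\<omega> \<bullet> d = 0" unfolding \<omega>_def using ps ps' by (simp add: inner_add_left inner_diff_left)
    have cv: "\<omega> \<bullet> v = 0" unfolding \<omega>_def by (simp add: inner_add_left inner_diff_left)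
    have cu: "umax K \<omega> k"
      unfolding umax_def
    proof (intro conjI ballI impI)
      show "k \<in> K" using ps(3) umax_def by blast
      fix y assume y: "y \<in> K" "y \<noteq> k"
      have a: "\<psi> \<bullet> y < \<psi> \<bullet> k" using ps(3) y unfolding umax_def by blast
      have b: "\<psi>' \<bullet> y < \<psi>' \<bullet> k" using ps'(3) y unfolding umax_def by blast
      have "(- (\<psi>' \<bullet> v)) * (\<psi> \<bullet> y) < (- (\<psi>' \<bullet> v)) * (\<psi> \<bullet> k)"
        using a ps'(2) by (intro mult_strict_left_mono) auto
      moreover have "(\<psi> \<bullet> v) * (\<psi>' \<bullet> y) < (\<psi> \<bullet> v) * (\<psi>' \<bullet> k)"
        using b ps(2) by (intro mult_strict_left_mono) auto
      ultimately show "\<omega> \<bullet> y < \<omega> \<bullet> k" unfolding \<omega>_def by (simp add: inner_add_left inner_diff_left)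
    qed
    obtain y where y: "y \<in> K" "y \<noteq> k" using two by blast
    have "\<omega> \<noteq> 0" using umax_other[OF cu y] .
    obtain c where c: "\<omega> = c *\<^sub>R \<psi>0" using mult[OF cd cv] by blast
    have "c \<noteq> 0" using c \<open>\<omega> \<noteq> 0\<close> by auto
    show "k \<in> {k1, k2}"
    proof (cases "c > 0")
      case True
      have "umax K ((1/c) *\<^sub>R \<omega>) k" using umax_scale[OF cu] True by simp
      then have "umax K \<psi>0 k" using c True by simp
      then show ?thesis using umax_unique[OF k1] by blast
    next
      case False
      then have "-1/c > 0" using \<open>c \<noteq> 0\<close> by (simp add: divide_neg_pos)
      have "umax K ((-1/c) *\<^sub>R \<omega>) k" using umax_scale[OF cu \<open>-1/c > 0\<close>] .
      then have "umax K (- \<psi>0) k" using c \<open>c \<noteq> 0\<close> by simp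
      then show ?thesis using umax_unique[OF k2] by blast
    qed
  qed
  have dint: "A0 \<inter> A1 = {k1, k2}" using dsub k1A k2A by blast
  have A0E: "A0 \<subseteq> E" unfolding A0_def E_def using umax_extreme by blast
  have A1E: "A1 \<subseteq> E" unfolding A1_def E_def using umax_extreme by blast
  have cun: "A0 \<union> A1 = E"
  proof
    show "A0 \<union> A1 \<subseteq> E" using A0E A1E by blast
    show "E \<subseteq> A0 \<union> A1"
    proof
      fix k assume "k \<in> E"
      then obtain \<psi> where "umax K \<psi> k" using extreme_umax[OF polyK] E_def by blast
      then have u: "umax K (\<psi> - ((\<psi> \<bullet> d) / (d \<bullet> d)) *\<^sub>R d) k" (is "umax K ?p k")
        using umax_projH KH by blast
      have pd: "?p \<bullet> d = 0" using projH_perp[OF d0] .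
      consider "?p \<bullet> v > 0" | "?p \<bullet> v < 0" | "?p \<bullet> v = 0" by linarith
      then show "k \<in> A0 \<union> A1"
      proof cases
        case 1 then show ?thesis unfolding A1_def using pd u by blast
      next
        case 2 then show ?thesis unfolding A0_def using pd u by blast
      next
        case 3
        obtain c where c: "?p = c *\<^sub>R \<psi>0" using mult[OF pd 3] by blast
        obtain y where y: "y \<in> K" "y \<noteq> k" using two by blast
        have "?p \<noteq> 0" using umax_other[OF u y] .
        then have "c \<noteq> 0" using c by auto
        show ?thesis
        proof (cases "c > 0")
          case True
          have "umax K ((1/c) *\<^sub>R ?p) k" using umax_scale[OF u] True by simp
          then have "umax K \<psi>0 k" using c True by simp
          then have "k = k1" using umax_unique[OF k1] by blast
          then show ?thesis using k1A by blast
        next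
          case False
          then have "-1/c > 0" using \<open>c \<noteq> 0\<close> by (simp add: divide_neg_pos)
          have "umax K ((-1/c) *\<^sub>R ?p) k" using umax_scale[OF u \<open>-1/c > 0\<close>] .
          then have "umax K (- \<psi>0) k" using c \<open>c \<noteq> 0\<close> by simp
          then have "k = k2" using umax_unique[OF k2] by blast
          then show ?thesis using k2A by blast
        qed
      qed
    qed
  qed
  have polyS: "polytope (segsum K v)" by (rule polytope_segsum[OF polyK])
  have SH: "segsum K v \<subseteq> {x. x \<bullet> d = 0}" by (rule segsum_sub_plane[OF KH vd])
  have aeq: "E' = A0 \<union> (\<lambda>k. k + v) ` A1"
  proof
    show "A0 \<union> (\<lambda>k. k + v) ` A1 \<subseteq> E'"
    proof
      fix x assume "x \<in> A0 \<union> (\<lambda>k. k + v) ` A1"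
      then consider "x \<in> A0" | k where "k \<in> A1" "x = k + v" by blast
      then show "x \<in> E'"
      proof cases
        case 1
        then obtain \<psi> where "\<psi> \<bullet> v < 0" "umax K \<psi> x" unfolding A0_def by blast
        then have "umax (segsum K v) \<psi> x" using umax_segsum_neg by blast
        then show ?thesis unfolding E'_def using umax_extreme by blast
      next
        case 2
        then obtain \<psi> where "\<psi> \<bullet> v > 0" "umax K \<psi> k" unfolding A1_def by blast
        then have "umax (segsum K v) \<psi> (k + v)" using umax_segsum_pos by blast
        then show ?thesis unfolding E'_def using umax_extreme 2 by blast
      qed
    qed
    show "E' \<subseteq> A0 \<union> (\<lambda>k. k + v) ` A1"
    proof
      fix x assume "x \<in> E'"
      then obtain \<psi> where "umax (segsum K v) \<psi> x" using extreme_umax[OF polyS] E'_def by blast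
      then have u: "umax (segsum K v) (\<psi> - ((\<psi> \<bullet> d) / (d \<bullet> d)) *\<^sub>R d) x" (is "umax _ ?p x")
        using umax_projH SH by blast
      have pd: "?p \<bullet> d = 0" using projH_perp[OF d0] .
      have xS: "x \<in> segsum K v" using u umax_def by blast
      then obtain y c where y: "x = y + c *\<^sub>R v" "y \<in> K" "0 \<le> c" "c \<le> 1" unfolding segsum_def by blast
      have inS: "y + c' *\<^sub>R v \<in> segsum K v" if "0 \<le> c'" "c' \<le> 1" for c'
        using segsumI[OF y(2) that] .
      have lt: "?p \<bullet> (y + c' *\<^sub>R v) < ?p \<bullet> x" if "0 \<le> c'" "c' \<le> 1" "c' \<noteq> c" for c'
      proof -
        have "y + c' *\<^sub>R v \<noteq> x" using y(1) that(3) v0 by auto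
        then show ?thesis using u inS[OF that(1,2)] unfolding umax_def by blast
      qed
      consider "?p \<bullet> v > 0" | "?p \<bullet> v < 0" | "?p \<bullet> v = 0" by linarith
      then show "x \<in> A0 \<union> (\<lambda>k. k + v) ` A1"
      proof cases
        case 1
        have c1: "c = 1"
        proof (rule ccontr)
          assume "c \<noteq> 1"
          then have "?p \<bullet> (y + 1 *\<^sub>R v) < ?p \<bullet> x" using lt[of 1] by simp
          moreover have "c * (?p \<bullet> v) \<le> 1 * (?p \<bullet> v)" using 1 y(4) by (intro mult_right_mono) auto
          ultimately show False using y(1) by (simp add: inner_add_right)
        qed
        have "umax K ?p y"
          unfolding umax_def
        proof (intro conjI ballI impI)
          show "y \<in> K" by (rule y(2))
          fix y' assume y': "y' \<in> K" "y' \<noteq> y"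
          have "y' + 1 *\<^sub>R v \<in> segsum K v" using segsumI[OF y'(1), of 1 v] segsumI[OF y'(1), of 0 v] by simp
          moreover have "y' + 1 *\<^sub>R v \<noteq> x" using y(1) c1 y' by auto
          ultimately have "?p \<bullet> (y' + 1 *\<^sub>R v) < ?p \<bullet> x" using u unfolding umax_def by blast
          then show "?p \<bullet> y' < ?p \<bullet> y" using y(1) c1 by (simp add: inner_add_right)
        qed
        then have "y \<in> A1" unfolding A1_def using pd 1 by blast
        then show ?thesis using y(1) c1 by simp
      next
        case 2
        have c0: "c = 0"
        proof (rule ccontr)
          assume "c \<noteq> 0"
          then have "?p \<bullet> (y + 0 *\<^sub>R v) < ?p \<bullet> x" using lt[of 0] by simp
          moreover have "c * (?p \<bullet> v) \<le> 0" using 2 y(3) by (simp add: mult_nonneg_nonpos)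
          ultimately show False using y(1) by (simp add: inner_add_right)
        qed
        have "umax K ?p y"
          unfolding umax_def
        proof (intro conjI ballI impI)
          show "y \<in> K" by (rule y(2))
          fix y' assume y': "y' \<in> K" "y' \<noteq> y"
          have "y' + 0 *\<^sub>R v \<in> segsum K v" using segsumI[OF y'(1), of 1 v] segsumI[OF y'(1), of 0 v] by simp
          moreover have "y' + 0 *\<^sub>R v \<noteq> x" using y(1) c0 y' by auto
          ultimately have "?p \<bullet> (y' + 0 *\<^sub>R v) < ?p \<bullet> x" using u unfolding umax_def by blast
          then show "?p \<bullet> y' < ?p \<bullet> y" using y(1) c0 by simp
        qed
        then have "y \<in> A0" unfolding A0_def using pd 2 by blast
        then show ?thesis using y(1) c0 by simp
      next
        case 3
        define c' where "c' = (if c = 0 then 1 else (0::real))"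
        have "c' \<noteq> c" "0 \<le> c'" "c' \<le> 1" unfolding c'_def by auto
        then have "?p \<bullet> (y + c' *\<^sub>R v) < ?p \<bullet> x" using lt by blast
        then show ?thesis using y(1) 3 by (simp add: inner_add_right)
      qed
    qed
  qed
  have bdisj: "A0 \<inter> (\<lambda>k. k + v) ` A1 = {}"
  proof (rule ccontr)
    assume "A0 \<inter> (\<lambda>k. k + v) ` A1 \<noteq> {}"
    then obtain k where k: "k \<in> A1" "k + v \<in> A0" by blast
    then obtain \<psi> where ps: "\<psi> \<bullet> v > 0" "umax K \<psi> k" unfolding A1_def by blast
    have "k + v \<in> K" using k(2) A0E EK by blast
    moreover have "k + v \<noteq> k" using v0 by simp
    ultimately have "\<psi> \<bullet> (k + v) < \<psi> \<bullet> k" using ps(2) unfolding umax_def by blast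
    then show False using ps(1) by (simp add: inner_add_right)
  qed
  have finA0: "finite A0" using finE A0E finite_subset by blast
  have finA1: "finite A1" using finE A1E finite_subset by blast
  have "card E' = card A0 + card ((\<lambda>k. k + v) ` A1)"
    unfolding aeq using bdisj finA0 finA1 by (simp add: card_Un_disjoint)
  also have "card ((\<lambda>k. k + v) ` A1) = card A1" by (rule card_image) (simp add: inj_on_def)
  also have "card A0 + card A1 = card (A0 \<union> A1) + card (A0 \<inter> A1)"
    using card_Un_Int[OF finA0 finA1] .
  also have "\<dots> = card E + 2" using cun dint k12 by simp
  finally show ?thesis unfolding E'_def E_def .
qed

definition KS :: "vec3 set \<Rightarrow> (vec3 \<Rightarrow> vec3) \<Rightarrow> vec3 set \<Rightarrow> vec3 set" where
  "KS T u S = {\<tau> + (\<Sum>g\<in>S. c g *\<^sub>R u g) | \<tau> c. \<tau> \<in> T \<and> (\<forall>g\<in>S. 0 \<le> c g \<and> c g \<le> 1)}"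

lemma KS_empty: "KS T u {} = T"
  unfolding KS_def by auto

lemma KS_insert:
  assumes "finite S" "g \<notin> S"
  shows "KS T u (insert g S) = segsum (KS T u S) (u g)"
proof
  show "KS T u (insert g S) \<subseteq> segsum (KS T u S) (u g)"
  proof
    fix x assume "x \<in> KS T u (insert g S)"
    then obtain \<tau> c where x: "x = \<tau> + (\<Sum>h\<in>insert g S. c h *\<^sub>R u h)" "\<tau> \<in> T"
      "\<forall>h\<in>insert g S. 0 \<le> c h \<and> c h \<le> 1" unfolding KS_def by blast
    have "x = (\<tau> + (\<Sum>h\<in>S. c h *\<^sub>R u h)) + c g *\<^sub>R u g"
      using x(1) assms by (simp add: algebra_simps)
    moreover have "\<tau> + (\<Sum>h\<in>S. c h *\<^sub>R u h) \<in> KS T u S"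
      unfolding KS_def using x(2,3) by blast
    ultimately show "x \<in> segsum (KS T u S) (u g)"
      using segsumI x(3) by auto
  qed
  show "segsum (KS T u S) (u g) \<subseteq> KS T u (insert g S)"
  proof
    fix x assume "x \<in> segsum (KS T u S) (u g)"
    then obtain y a where y: "x = y + a *\<^sub>R u g" "y \<in> KS T u S" "0 \<le> a" "a \<le> 1"
      unfolding segsum_def by blast
    then obtain \<tau> c where yc: "y = \<tau> + (\<Sum>h\<in>S. c h *\<^sub>R u h)" "\<tau> \<in> T"
      "\<forall>h\<in>S. 0 \<le> c h \<and> c h \<le> 1" unfolding KS_def by blast
    define c' where "c' = c(g := a)"
    have "(\<Sum>h\<in>S. c' h *\<^sub>R u h) = (\<Sum>h\<in>S. c h *\<^sub>R u h)"
      unfolding c'_def using assms(2) by (intro sum.cong) auto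
    then have "x = \<tau> + (\<Sum>h\<in>insert g S. c' h *\<^sub>R u h)"
      using y(1) yc(1) assms by (simp add: c'_def algebra_simps)
    moreover have "\<forall>h\<in>insert g S. 0 \<le> c' h \<and> c' h \<le> 1" using yc(3) y(3,4) unfolding c'_def by auto
    ultimately show "x \<in> KS T u (insert g S)" unfolding KS_def using yc(2) by blast
  qed
qed

lemma umax_segsum:
  assumes "umax K \<psi> k" "\<psi> \<bullet> v \<noteq> 0"
  shows "\<exists>k'. umax (segsum K v) \<psi> k'"
  using assms umax_segsum_pos umax_segsum_neg by (cases "\<psi> \<bullet> v > 0") force+

lemma KS_induct:
  fixes d :: vec3 and T :: "vec3 set" and u :: "vec3 \<Rightarrow> vec3" and G :: "vec3 set"
  assumes finG: "finite G" and polyT: "polytope T" and TH: "T \<subseteq> {x. x \<bullet> d = 0}"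
    and cardT: "card {x. x extreme_point_of T} = 3" and d0: "d \<noteq> 0"
    and ug: "\<And>g. g \<in> G \<Longrightarrow> u g \<bullet> d = 0 \<and> u g \<noteq> 0"
    and hyp: "\<And>g \<psi>. g \<in> G \<Longrightarrow> \<psi> \<bullet> d = 0 \<Longrightarrow> \<psi> \<bullet> u g = 0 \<Longrightarrow> \<psi> \<noteq> 0 \<Longrightarrow>
                 (\<forall>h\<in>G. h \<noteq> g \<longrightarrow> \<psi> \<bullet> u h \<noteq> 0) \<and> (\<exists>k. umax T \<psi> k)"
    and SG: "S \<subseteq> G"
  shows "polytope (KS T u S) \<and> KS T u S \<subseteq> {x. x \<bullet> d = 0} \<and>
         card {x. x extreme_point_of (KS T u S)} = 3 + 2 * card S \<and>
         (\<forall>\<psi>. (\<forall>g\<in>S. \<psi> \<bullet> u g \<noteq> 0) \<longrightarrow> (\<exists>k. umax T \<psi> k) \<longrightarrow> (\<exists>k. umax (KS T u S) \<psi> k))"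
proof -
  have finS: "finite S" using finG SG finite_subset by blast
  from finS SG show ?thesis
  proof (induction S rule: finite_induct)
    case empty
    then show ?case using polyT TH cardT by (simp add: KS_empty)
  next
    case (insert g S)
    have IH: "polytope (KS T u S)" "KS T u S \<subseteq> {x. x \<bullet> d = 0}"
      "card {x. x extreme_point_of (KS T u S)} = 3 + 2 * card S"
      "\<And>\<psi>. (\<forall>g\<in>S. \<psi> \<bullet> u g \<noteq> 0) \<Longrightarrow> (\<exists>k. umax T \<psi> k) \<Longrightarrow> (\<exists>k. umax (KS T u S) \<psi> k)"
      using insert.IH insert.prems by auto
    have gG: "g \<in> G" using insert.prems by blast
    have eq: "KS T u (insert g S) = segsum (KS T u S) (u g)" by (rule KS_insert[OF insert.hyps])
    have card': "card {x. x extreme_point_of (segsum (KS T u S) (u g))} =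
                 card {x. x extreme_point_of (KS T u S)} + 2"
    proof (rule step[OF IH(1) IH(2) d0])
      show "u g \<bullet> d = 0" "u g \<noteq> 0" using ug[OF gG] by auto
      show "2 \<le> card {x. x extreme_point_of KS T u S}" using IH(3) by simp
      fix \<psi> assume p: "\<psi> \<bullet> d = 0" "\<psi> \<bullet> u g = 0" "\<psi> \<noteq> 0"
      from hyp[OF gG p] have "\<forall>h\<in>S. \<psi> \<bullet> u h \<noteq> 0" "\<exists>k. umax T \<psi> k"
        using insert.hyps(2) insert.prems by auto
      then show "\<exists>k. umax (KS T u S) \<psi> k" using IH(4) by blast
    qed
    show ?case
    proof (intro conjI allI impI)
      show "polytope (KS T u (insert g S))" unfolding eq by (rule polytope_segsum[OF IH(1)])
      show "KS T u (insert g S) \<subseteq> {x. x \<bullet> d = 0}" unfolding eq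
        using segsum_sub_plane[OF IH(2)] ug[OF gG] by blast
      show "card {x. x extreme_point_of KS T u (insert g S)} = 3 + 2 * card (insert g S)"
        unfolding eq card' IH(3) using insert.hyps by simp
      fix \<psi> assume a: "\<forall>h\<in>insert g S. \<psi> \<bullet> u h \<noteq> 0" "\<exists>k. umax T \<psi> k"
      then obtain k where "umax (KS T u S) \<psi> k" using IH(4) by blast
      then show "\<exists>k. umax (KS T u (insert g S)) \<psi> k" unfolding eq
        using umax_segsum a(1) by blast
    qed
  qed
qed

lemma KS_linear_image:
  assumes "linear L"
  shows "L ` KS T u S = KS (L ` T) (\<lambda>g. L (u g)) S"
proof
  show "L ` KS T u S \<subseteq> KS (L ` T) (\<lambda>g. L (u g)) S"
  proof
    fix x assume "x \<in> L ` KS T u S"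
    then obtain \<tau> c where x: "x = L (\<tau> + (\<Sum>g\<in>S. c g *\<^sub>R u g))" "\<tau> \<in> T" "\<forall>g\<in>S. 0 \<le> c g \<and> c g \<le> 1"
      unfolding KS_def by blast
    have "x = L \<tau> + (\<Sum>g\<in>S. c g *\<^sub>R L (u g))"
      using x(1) assms by (simp add: linear_add linear_sum linear_scale)
    then show "x \<in> KS (L ` T) (\<lambda>g. L (u g)) S" unfolding KS_def using x(2,3) by blast
  qed
  show "KS (L ` T) (\<lambda>g. L (u g)) S \<subseteq> L ` KS T u S"
  proof
    fix x assume "x \<in> KS (L ` T) (\<lambda>g. L (u g)) S"
    then obtain \<tau> c where x: "x = L \<tau> + (\<Sum>g\<in>S. c g *\<^sub>R L (u g))" "\<tau> \<in> T" "\<forall>g\<in>S. 0 \<le> c g \<and> c g \<le> 1"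
      unfolding KS_def by blast
    have "x = L (\<tau> + (\<Sum>g\<in>S. c g *\<^sub>R u g))"
      using x(1) assms by (simp add: linear_add linear_sum linear_scale)
    moreover have "\<tau> + (\<Sum>g\<in>S. c g *\<^sub>R u g) \<in> KS T u S" unfolding KS_def using x(2,3) by blast
    ultimately show "x \<in> L ` KS T u S" by blast
  qed
qed


lemma polytope_KS:
  assumes "finite S" "polytope T" shows "polytope (KS T u S)"
  using assms(1)
proof (induction S rule: finite_induct)
  case empty then show ?case using assms(2) by (simp add: KS_empty)
next
  case (insert g S) then show ?case by (simp add: KS_insert polytope_segsum)
qed

lemma KS_sub: "\<tau> \<in> T \<Longrightarrow> \<tau> \<in> KS T u S"
  unfolding KS_def by (intro CollectI exI[of _ \<tau>] exI[of _ "\<lambda>_. 0"]) auto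

lemma KS_I: "\<tau> \<in> T \<Longrightarrow> \<forall>g\<in>S. 0 \<le> c g \<and> c g \<le> 1 \<Longrightarrow> \<tau> + (\<Sum>g\<in>S. c g *\<^sub>R u g) \<in> KS T u S"
  unfolding KS_def by blast

definition cstar :: "vec3 \<Rightarrow> vec3 \<Rightarrow> real" where
  "cstar m w = (if m \<bullet> w > 0 then 1 else 0)"

lemma KS_max:
  fixes u :: "vec3 \<Rightarrow> vec3" and m \<tau>0 :: vec3 and S T :: "vec3 set"
  assumes "finite S" "\<tau>0 \<in> T" "\<And>\<tau>. \<tau> \<in> T \<Longrightarrow> m \<bullet> \<tau> \<le> m \<bullet> \<tau>0"
  defines "x0 \<equiv> \<tau>0 + (\<Sum>g\<in>S. cstar m (u g) *\<^sub>R u g)"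
  shows "x0 \<in> KS T u S" and "\<And>y. y \<in> KS T u S \<Longrightarrow> m \<bullet> y \<le> m \<bullet> x0"
    and "\<And>\<tau>1. \<tau>1 \<in> T \<Longrightarrow> x0 + (\<tau>1 - \<tau>0) \<in> KS T u S"
    and "\<And>g0. g0 \<in> S \<Longrightarrow> m \<bullet> u g0 = 0 \<Longrightarrow> x0 + u g0 \<in> KS T u S"
proof -
  have cs: "\<forall>g\<in>S. 0 \<le> cstar m (u g) \<and> cstar m (u g) \<le> 1" by (simp add: cstar_def)
  show "x0 \<in> KS T u S" unfolding x0_def using KS_I[OF assms(2) cs] .
  show "x0 + (\<tau>1 - \<tau>0) \<in> KS T u S" if "\<tau>1 \<in> T" for \<tau>1
  proof -
    have eq: "x0 + (\<tau>1 - \<tau>0) = \<tau>1 + (\<Sum>g\<in>S. cstar m (u g) *\<^sub>R u g)" unfolding x0_def by simp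
    have "\<tau>1 + (\<Sum>g\<in>S. cstar m (u g) *\<^sub>R u g) \<in> KS T u S" by (rule KS_I[OF that cs])
    then show ?thesis unfolding eq .
  qed
  show "x0 + u g0 \<in> KS T u S" if g0: "g0 \<in> S" "m \<bullet> u g0 = 0" for g0
  proof -
    define c where "c = (\<lambda>g. cstar m (u g))(g0 := 1)"
    have "(\<Sum>g\<in>S. c g *\<^sub>R u g) = c g0 *\<^sub>R u g0 + (\<Sum>g\<in>S - {g0}. c g *\<^sub>R u g)"
      using assms(1) g0(1) by (simp add: sum.remove)
    also have "(\<Sum>g\<in>S - {g0}. c g *\<^sub>R u g) = (\<Sum>g\<in>S - {g0}. cstar m (u g) *\<^sub>R u g)"
      unfolding c_def by (intro sum.cong) auto
    also have "\<dots> = (\<Sum>g\<in>S. cstar m (u g) *\<^sub>R u g)"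
      using assms(1) g0 by (simp add: sum.remove cstar_def)
    finally have "x0 + u g0 = \<tau>0 + (\<Sum>g\<in>S. c g *\<^sub>R u g)" unfolding x0_def c_def by simp
    moreover have "\<forall>g\<in>S. 0 \<le> c g \<and> c g \<le> 1" using cs unfolding c_def by auto
    moreover have "\<tau>0 + (\<Sum>g\<in>S. c g *\<^sub>R u g) \<in> KS T u S" by (rule KS_I[OF assms(2) calculation(2)])
    ultimately show ?thesis by simp
  qed
  show "m \<bullet> y \<le> m \<bullet> x0" if yK: "y \<in> KS T u S" for y
  proof -
    obtain \<tau> c where y: "y = \<tau> + (\<Sum>g\<in>S. c g *\<^sub>R u g)" "\<tau> \<in> T" "\<forall>g\<in>S. 0 \<le> c g \<and> c g \<le> 1"
      using yK unfolding KS_def by blast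
    have "m \<bullet> y = m \<bullet> \<tau> + (\<Sum>g\<in>S. c g * (m \<bullet> u g))" using y(1) by (simp add: inner_add_right inner_sum_right)
    also have "\<dots> \<le> m \<bullet> \<tau>0 + (\<Sum>g\<in>S. cstar m (u g) * (m \<bullet> u g))"
    proof (rule add_mono)
      show "m \<bullet> \<tau> \<le> m \<bullet> \<tau>0" using assms(3) y(2) .
      show "(\<Sum>g\<in>S. c g * (m \<bullet> u g)) \<le> (\<Sum>g\<in>S. cstar m (u g) * (m \<bullet> u g))"
      proof (rule sum_mono)
        fix g assume "g \<in> S"
        then have "0 \<le> c g" "c g \<le> 1" using y(3) by auto
        then show "c g * (m \<bullet> u g) \<le> cstar m (u g) * (m \<bullet> u g)"
          unfolding cstar_def by (cases "m \<bullet> u g > 0") (auto simp: mult_left_le_one_le mult_nonneg_nonpos)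
      qed
    qed
    also have "\<dots> = m \<bullet> x0" unfolding x0_def by (simp add: inner_add_right inner_sum_right)
    finally show ?thesis .
  qed
qed


lemma hull3_max:
  fixes m p q r :: vec3
  assumes "m \<bullet> q \<le> m \<bullet> p" "m \<bullet> r \<le> m \<bullet> p" "\<tau> \<in> convex hull {p, q, r}"
  shows "m \<bullet> \<tau> \<le> m \<bullet> p"
proof -
  have "convex hull {p, q, r} \<subseteq> {x. m \<bullet> x \<le> m \<bullet> p}"
  proof (rule hull_minimal)
    show "{p, q, r} \<subseteq> {x. m \<bullet> x \<le> m \<bullet> p}" using assms(1,2) by simp
    show "convex {x. m \<bullet> x \<le> m \<bullet> p}" by (rule convex_halfspace_le)
  qed
  then show ?thesis using assms(3) by blast
qed

lemma facet_span:
  fixes P :: "vec3 set"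
  assumes convP: "convex P" and affP: "aff_dim P = 3" and m0: "m \<noteq> 0"
    and x: "x \<in> P" "x + w1 \<in> P" "x + w2 \<in> P" and mx: "\<And>y. y \<in> P \<Longrightarrow> m \<bullet> y \<le> m \<bullet> x"
    and mw: "m \<bullet> w1 = 0" "m \<bullet> w2 = 0" and nc: "\<not> collinear {0, w1, w2}"
    and nofacet: "\<And>F. F facet_of P \<Longrightarrow> \<not> plane_orth_facet d F"
  shows "d \<notin> span {w1, w2}"
proof
  assume dspan: "d \<in> span {w1, w2}"
  define F where "F = P \<inter> {y. m \<bullet> y = m \<bullet> x}"
  have face: "F face_of P" unfolding F_def by (rule face_of_Int_supporting_hyperplane_le[OF convP mx])
  have sub3: "{x, x + w1, x + w2} \<subseteq> F" unfolding F_def using x mw by (auto simp: inner_add_right)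
  have "F \<subseteq> {y. m \<bullet> y = m \<bullet> x}" unfolding F_def by blast
  then have "aff_dim F \<le> aff_dim {y. m \<bullet> y = m \<bullet> x}" by (rule aff_dim_subset)
  then have le2: "aff_dim F \<le> 2" using aff_dim_hyperplane[OF m0, of "m \<bullet> x"] by simp
  have eq3: "{x, x + w1, x + w2} = (+) x ` {0, w1, w2}" by auto
  have "\<not> aff_dim {0, w1, w2} \<le> 1" using nc collinear_aff_dim by blast
  then have "aff_dim {0, w1, w2} > 1" by simp
  then have "aff_dim {x, x + w1, x + w2} > 1" unfolding eq3 aff_dim_translation_eq .
  then have "aff_dim F \<ge> 2" using aff_dim_subset[OF sub3] by linarith
  then have "aff_dim F = 2" using le2 by linarith
  then have "F facet_of P" unfolding facet_of_def using face affP sub3 by auto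
  moreover have "plane_orth_facet d F"
  proof -
    have "w1 \<in> {a - b | a b. a \<in> F \<and> b \<in> F}" using sub3 by (intro CollectI exI[of _ "x + w1"] exI[of _ x]) auto
    moreover have "w2 \<in> {a - b | a b. a \<in> F \<and> b \<in> F}" using sub3 by (intro CollectI exI[of _ "x + w2"] exI[of _ x]) auto
    ultimately have "span {w1, w2} \<subseteq> span {a - b | a b. a \<in> F \<and> b \<in> F}"
      by (intro span_mono) auto
    then show ?thesis unfolding plane_orth_facet_def using dspan by blast
  qed
  ultimately show False using nofacet by blast
qed

lemma fnp_either:
  fixes u :: vec3
  assumes "u \<noteq> 0" shows "first_nonzero_pos u \<or> first_nonzero_pos (- u)"
proof -
  have "u$1 \<noteq> 0 \<or> u$2 \<noteq> 0 \<or> u$3 \<noteq> 0" using assms by (auto simp: vec_eq_iff forall_3)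
  then show ?thesis unfolding first_nonzero_pos_def by auto
qed

lemma fnp_scale:
  fixes u :: vec3
  assumes "c > 0" shows "first_nonzero_pos (c *\<^sub>R u) \<longleftrightarrow> first_nonzero_pos u"
  using assms unfolding first_nonzero_pos_def by (simp add: zero_less_mult_iff)

lemma normdir:
  fixes u :: vec3
  assumes "u \<noteq> 0" shows "\<exists>c. c \<noteq> 0 \<and> norm (c *\<^sub>R u) = 1 \<and> first_nonzero_pos (c *\<^sub>R u)"
proof -
  have n: "norm u > 0" using assms by simp
  from fnp_either[OF assms] show ?thesis
  proof
    assume "first_nonzero_pos u"
    then show ?thesis using n fnp_scale[of "1 / norm u" u]
      by (intro exI[of _ "1 / norm u"]) simp
  next
    assume "first_nonzero_pos (- u)"
    then have "first_nonzero_pos ((1 / norm u) *\<^sub>R (- u))" using n fnp_scale[of "1 / norm u" "- u"] by simp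
    then show ?thesis using n by (intro exI[of _ "- 1 / norm u"]) simp
  qed
qed

lemma edge_dir_exists:
  assumes "e edge_of P" "a extreme_point_of P" "b extreme_point_of P" "a \<in> e" "b \<in> e" "a \<noteq> b"
  shows "\<exists>w\<in>edge_dirs P. \<exists>c. c \<noteq> 0 \<and> b - a = c *\<^sub>R w"
proof -
  have "b - a \<noteq> 0" using assms(6) by simp
  then obtain c where c: "c \<noteq> 0" "norm (c *\<^sub>R (b - a)) = 1" "first_nonzero_pos (c *\<^sub>R (b - a))"
    using normdir by blast
  define w where "w = c *\<^sub>R (b - a)"
  have ba: "b - a = (1 / c) *\<^sub>R w" unfolding w_def using c(1) by simp
  have ed: "edge_direction w P" unfolding edge_direction_def
    using c assms ba unfolding w_def[symmetric] by blast
  have "1 / c \<noteq> 0" using c(1) by simp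
  then show ?thesis unfolding edge_dirs_def using ba ed by (intro bexI[of _ w] exI[of _ "1/c"]) auto
qed

lemma tri_edge:
  fixes p q r :: vec3
  assumes "\<not> collinear {p, q, r}"
  shows "\<exists>w\<in>edge_dirs (convex hull {p, q, r}). \<exists>c. c \<noteq> 0 \<and> q - p = c *\<^sub>R w"
proof -
  have ind: "\<not> affine_dependent {p, q, r}" and pq: "p \<noteq> q"
    using assms unfolding collinear_3_eq_affine_dependent[of p q r] by simp_all
  have ind2: "\<not> affine_dependent {p, q}"
    using ind affine_dependent_subset[of "{p,q}" "{p,q,r}"] by blast
  have face: "convex hull {p, q} face_of convex hull {p, q, r}"
    unfolding face_of_convex_hull_affine_independent[OF ind] by (intro exI[of _ "{p,q}"]) auto
  have "of_nat (card {p, q}) = aff_dim {p, q} + 1" by (rule aff_dim_affine_independent[OF ind2])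
  then have "aff_dim {p, q} = 1" using pq by simp
  then have "aff_dim (convex hull {p, q}) = 1" by (simp add: aff_dim_convex_hull)
  then have edge: "convex hull {p, q} edge_of convex hull {p, q, r}"
    unfolding edge_of_def using face by simp
  have ep: "p extreme_point_of convex hull {p, q, r}" "q extreme_point_of convex hull {p, q, r}"
    unfolding extreme_point_of_convex_hull_affine_independent[OF ind] by simp_all
  have "p \<in> convex hull {p, q}" "q \<in> convex hull {p, q}" by (simp_all add: hull_inc)
  then show ?thesis using edge_dir_exists[OF edge ep] pq by blast
qed

lemma Z_KS: "(\<lambda>x. a + x) ` zonotope_gen G = KS {a} (\<lambda>g. g) G"
  unfolding zonotope_gen_def KS_def by auto

lemma exists_sep_normal:
  assumes gs: "generator_set G" and gG: "g \<in> G"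
  shows "\<exists>m. m \<bullet> g = 0 \<and> (\<forall>k\<in>G. k \<noteq> g \<longrightarrow> m \<bullet> k \<noteq> 0)"
proof -
  have finG: "finite G" and g0: "g \<noteq> 0" and nc: "\<And>k. k \<in> G \<Longrightarrow> k \<noteq> g \<Longrightarrow> \<not> collinear {0, g, k}"
    and nz: "\<And>k. k \<in> G \<Longrightarrow> k \<noteq> 0"
    using gs gG unfolding generator_set_def by metis+
  obtain i where i: "g \<times> axis i 1 \<noteq> 0" using cross_basis_nonzero[OF g0] by blast
  define b1 where "b1 = g \<times> axis i 1"
  define b2 where "b2 = g \<times> b1"
  have b1g: "b1 \<bullet> g = 0" unfolding b1_def by (simp add: dot_cross_self inner_commute)
  have b2g: "b2 \<bullet> g = 0" unfolding b2_def by (simp add: dot_cross_self inner_commute)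
  have b10: "b1 \<noteq> 0" using i b1_def by simp
  have nb: "\<not> (b1 \<bullet> k = 0 \<and> b2 \<bullet> k = 0)" if k: "k \<in> G" "k \<noteq> g" for k
  proof
    assume z: "b1 \<bullet> k = 0 \<and> b2 \<bullet> k = 0"
    have "k \<noteq> 0" using nz k(1) by blast
    then obtain c where c: "b1 \<times> b2 = c *\<^sub>R k"
      using perp_both_cross[of k b1 b2] z by (auto simp: inner_commute)
    have "b1 \<times> b2 = (b1 \<bullet> b1) *\<^sub>R g" unfolding b2_def using b1g by (simp add: Lagrange inner_commute)
    then have e1: "(b1 \<bullet> b1) *\<^sub>R g = c *\<^sub>R k" using c by simp
    have "b1 \<bullet> b1 \<noteq> 0" using b10 by simp
    then have "g = (1 / (b1 \<bullet> b1)) *\<^sub>R ((b1 \<bullet> b1) *\<^sub>R g)" by simp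
    then have "g = (c / (b1 \<bullet> b1)) *\<^sub>R k" unfolding e1 by simp
    then have "collinear {0, k, g}" by (auto simp: collinear_lemma)
    then have "collinear {0, g, k}" by (simp add: insert_commute)
    then show False using nc k by blast
  qed
  have "finite ((\<lambda>k. - (b1 \<bullet> k) / (b2 \<bullet> k)) ` G)" using finG by simp
  then obtain s where s: "s \<notin> (\<lambda>k. - (b1 \<bullet> k) / (b2 \<bullet> k)) ` G"
    using ex_new_if_finite[OF infinite_UNIV_char_0] by blast
  define m where "m = b1 + s *\<^sub>R b2"
  have "m \<bullet> g = 0" unfolding m_def using b1g b2g by (simp add: inner_add_left)
  moreover have "m \<bullet> k \<noteq> 0" if k: "k \<in> G" "k \<noteq> g" for k
  proof
    assume mk: "m \<bullet> k = 0"
    then have eq: "b1 \<bullet> k + s * (b2 \<bullet> k) = 0" unfolding m_def by (simp add: inner_add_left)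
    show False
    proof (cases "b2 \<bullet> k = 0")
      case True then show False using eq nb[OF k] by simp
    next
      case False
      then have "s = - (b1 \<bullet> k) / (b2 \<bullet> k)" using eq by (simp add: field_simps)
      then show False using s k(1) by blast
    qed
  qed
  ultimately show ?thesis by blast
qed

lemma zono_edge:
  assumes gs: "generator_set G" and gG: "g \<in> G" and Zeq: "Z = (\<lambda>x. a + x) ` zonotope_gen G"
  shows "\<exists>w\<in>edge_dirs Z. \<exists>c. c \<noteq> 0 \<and> g = c *\<^sub>R w"
proof -
  have finG: "finite G" and g0: "g \<noteq> 0"
    using gs gG unfolding generator_set_def by metis+
  have ZK: "Z = KS {a} (\<lambda>g. g) G" using Zeq Z_KS by simp
  obtain m where m: "m \<bullet> g = 0" "\<And>k. k \<in> G \<Longrightarrow> k \<noteq> g \<Longrightarrow> m \<bullet> k \<noteq> 0"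
    using exists_sep_normal[OF gs gG] by blast
  define x0 where "x0 = a + (\<Sum>k\<in>G. cstar m k *\<^sub>R k)"
  have mx: "x0 \<in> Z" "\<And>y. y \<in> Z \<Longrightarrow> m \<bullet> y \<le> m \<bullet> x0" "x0 + g \<in> Z"
  proof -
    have hm: "\<And>\<tau>. \<tau> \<in> {a} \<Longrightarrow> m \<bullet> \<tau> \<le> m \<bullet> a" by simp
    note KM = KS_max[OF finG singletonI hm, where u="\<lambda>g. g"]
    show "x0 \<in> Z" using KM(1) unfolding x0_def ZK .
    show "\<And>y. y \<in> Z \<Longrightarrow> m \<bullet> y \<le> m \<bullet> x0" using KM(2) unfolding x0_def ZK .
    show "x0 + g \<in> Z" unfolding x0_def ZK by (rule KM(4)) (use gG m(1) in auto)
  qed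
  have convZ: "convex Z" unfolding ZK using polytope_KS[OF finG polytope_sing] polytope_imp_convex by blast
  define F where "F = Z \<inter> {y. m \<bullet> y = m \<bullet> x0}"
  have face: "F face_of Z" unfolding F_def by (rule face_of_Int_supporting_hyperplane_le[OF convZ mx(2)])
  have Fseg: "F = closed_segment x0 (x0 + g)"
  proof
    show "closed_segment x0 (x0 + g) \<subseteq> F"
    proof
      fix y assume y: "y \<in> closed_segment x0 (x0 + g)"
      have "y \<in> Z" using closed_segment_subset[OF mx(1) mx(3) convZ] y by blast
      moreover obtain u where "y = (1 - u) *\<^sub>R x0 + u *\<^sub>R (x0 + g)" using y by (auto simp: in_segment)
      then have "y = x0 + u *\<^sub>R g" by (simp add: algebra_simps)
      then have "m \<bullet> y = m \<bullet> x0" using m(1) by (simp add: inner_add_right)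
      ultimately show "y \<in> F" unfolding F_def by blast
    qed
    show "F \<subseteq> closed_segment x0 (x0 + g)"
    proof
      fix y assume "y \<in> F"
      then have yZ: "y \<in> Z" and my: "m \<bullet> y = m \<bullet> x0" unfolding F_def by auto
      obtain \<tau> c where yc: "y = \<tau> + (\<Sum>k\<in>G. c k *\<^sub>R k)" "\<tau> \<in> {a}" "\<forall>k\<in>G. 0 \<le> c k \<and> c k \<le> 1"
        using yZ unfolding ZK KS_def by blast
      have termle: "c k * (m \<bullet> k) \<le> cstar m k * (m \<bullet> k)" if "k \<in> G" for k
        using yc(3) that unfolding cstar_def
        by (cases "m \<bullet> k > 0") (auto simp: mult_left_le_one_le mult_nonneg_nonpos)
      have termeq: "c k = cstar m k" if k: "k \<in> G" "k \<noteq> g" for k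
      proof (rule ccontr)
        assume ne: "c k \<noteq> cstar m k"
        have neq: "c k * (m \<bullet> k) \<noteq> cstar m k * (m \<bullet> k)" using ne m(2)[OF k] by simp
        have lt: "c k * (m \<bullet> k) < cstar m k * (m \<bullet> k)" using termle[OF k(1)] neq by linarith
        have "(\<Sum>k\<in>G. c k * (m \<bullet> k)) < (\<Sum>k\<in>G. cstar m k * (m \<bullet> k))"
          by (rule sum_strict_mono_ex1[OF finG]) (use termle lt k(1) in auto)
        moreover have "m \<bullet> y = m \<bullet> a + (\<Sum>k\<in>G. c k * (m \<bullet> k))"
          using yc(1,2) by (simp add: inner_add_right inner_sum_right)
        moreover have "m \<bullet> x0 = m \<bullet> a + (\<Sum>k\<in>G. cstar m k * (m \<bullet> k))"
          unfolding x0_def by (simp add: inner_add_right inner_sum_right)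
        ultimately show False using my by simp
      qed
      have cg: "cstar m g = 0" using m(1) unfolding cstar_def by simp
      have "(\<Sum>k\<in>G. c k *\<^sub>R k) = c g *\<^sub>R g + (\<Sum>k\<in>G - {g}. c k *\<^sub>R k)"
        using finG gG by (simp add: sum.remove)
      also have "(\<Sum>k\<in>G - {g}. c k *\<^sub>R k) = (\<Sum>k\<in>G - {g}. cstar m k *\<^sub>R k)"
        using termeq by (intro sum.cong) auto
      also have "\<dots> = (\<Sum>k\<in>G. cstar m k *\<^sub>R k)"
        using finG gG cg by (simp add: sum.remove)
      finally have "y = x0 + c g *\<^sub>R g" using yc(1,2) unfolding x0_def by (simp add: algebra_simps)
      moreover have "0 \<le> c g" "c g \<le> 1" using yc(3) gG by auto
      ultimately show "y \<in> closed_segment x0 (x0 + g)"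
        unfolding in_segment by (intro conjI exI[of _ "c g"]) (auto simp: algebra_simps)
    qed
  qed
  have ne: "x0 \<noteq> x0 + g" using g0 by simp
  have "aff_dim F = 1" unfolding Fseg segment_convex_hull aff_dim_convex_hull
    using aff_dim_affine_independent[of "{x0, x0 + g}"] ne by (simp add: affine_independent_2)
  then have edge: "F edge_of Z" unfolding edge_of_def using face by simp
  have e1: "x0 extreme_point_of Z" "x0 + g extreme_point_of Z"
    using extreme_point_of_face[OF face] unfolding Fseg extreme_point_of_segment by auto
  have "x0 \<in> F" "x0 + g \<in> F" unfolding Fseg by auto
  from edge_dir_exists[OF edge e1 this ne] show ?thesis by simp
qed

lemma tri_max3:
  fixes m p q r :: vec3
  shows "\<exists>\<tau>0\<in>{p, q, r}. \<forall>\<tau>\<in>convex hull {p, q, r}. m \<bullet> \<tau> \<le> m \<bullet> \<tau>0"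
proof -
  have h1: "convex hull {p, q, r} = convex hull {q, p, r}" by (simp add: insert_commute)
  have h2: "convex hull {p, q, r} = convex hull {r, p, q}" by (simp add: insert_commute)
  consider "m \<bullet> q \<le> m \<bullet> p \<and> m \<bullet> r \<le> m \<bullet> p" | "m \<bullet> p \<le> m \<bullet> q \<and> m \<bullet> r \<le> m \<bullet> q"
    | "m \<bullet> p \<le> m \<bullet> r \<and> m \<bullet> q \<le> m \<bullet> r" by linarith
  then show ?thesis
  proof cases
    case 1 then show ?thesis using hull3_max[of m q p r] by blast
  next
    case 2 then show ?thesis using hull3_max[of m p q r] unfolding h1 by blast
  next
    case 3 then show ?thesis using hull3_max[of m p r q] unfolding h2 by blast
  qed
qed

lemma N1_gen:
  fixes G :: "vec3 set" and p q r d g h :: vec3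
  assumes finG: "finite G" and PK: "P = KS (convex hull {p, q, r}) (\<lambda>g. g) G"
    and convP: "convex P" and affP: "aff_dim P = 3" and gh: "g \<in> G" "h \<in> G"
    and nc: "\<not> collinear {0, g, h}"
    and nof: "\<And>F. F facet_of P \<Longrightarrow> \<not> plane_orth_facet d F"
  shows "d \<notin> span {g, h}"
proof -
  define m where "m = g \<times> h"
  have m0: "m \<noteq> 0" unfolding m_def using nc by (simp add: cross_eq_0)
  have mg: "m \<bullet> g = 0" "m \<bullet> h = 0" unfolding m_def by (simp_all add: dot_cross_self inner_commute)
  obtain \<tau>0 where t0: "\<tau>0 \<in> {p, q, r}" "\<And>\<tau>. \<tau> \<in> convex hull {p, q, r} \<Longrightarrow> m \<bullet> \<tau> \<le> m \<bullet> \<tau>0"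
    using tri_max3[of p q r m] by blast
  have t0T: "\<tau>0 \<in> convex hull {p, q, r}" using t0(1) by (rule hull_inc)
  note KM = KS_max[OF finG t0T t0(2), where u="\<lambda>g. g"]
  define x0 where "x0 = \<tau>0 + (\<Sum>g\<in>G. cstar m g *\<^sub>R g)"
  have x1: "x0 \<in> P" unfolding PK x0_def by (rule KM(1))
  have x2: "x0 + g \<in> P" unfolding PK x0_def by (rule KM(4)) (use gh mg in auto)
  have x3: "x0 + h \<in> P" unfolding PK x0_def by (rule KM(4)) (use gh mg in auto)
  have x4: "\<And>y. y \<in> P \<Longrightarrow> m \<bullet> y \<le> m \<bullet> x0" unfolding PK x0_def by (rule KM(2))
  note x = x1 x2 x3 x4
  show ?thesis by (rule facet_span[OF convP affP m0 x(1,2,3) x(4) mg nc nof])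
qed

lemma N2_gen:
  fixes G :: "vec3 set" and p q r d g :: vec3
  assumes finG: "finite G" and PK: "P = KS (convex hull {p, q, r}) (\<lambda>g. g) G"
    and convP: "convex P" and affP: "aff_dim P = 3" and gG: "g \<in> G"
    and nc: "\<not> collinear {0, q - p, g}"
    and nof: "\<And>F. F facet_of P \<Longrightarrow> \<not> plane_orth_facet d F"
  shows "d \<notin> span {q - p, g}"
proof -
  define m0 where "m0 = (q - p) \<times> g"
  define m where "m = (if m0 \<bullet> (r - p) \<le> 0 then m0 else - m0)"
  have "m0 \<noteq> 0" unfolding m0_def using nc by (simp add: cross_eq_0)
  then have mne: "m \<noteq> 0" unfolding m_def by simp
  have "m0 \<bullet> (q - p) = 0" "m0 \<bullet> g = 0" unfolding m0_def by (simp_all add: dot_cross_self inner_commute)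
  then have mw: "m \<bullet> (q - p) = 0" "m \<bullet> g = 0" unfolding m_def by auto
  have mr: "m \<bullet> (r - p) \<le> 0" unfolding m_def by auto
  have mq: "m \<bullet> q \<le> m \<bullet> p" "m \<bullet> r \<le> m \<bullet> p" using mw mr by (simp_all add: inner_diff_right)
  have t0: "\<And>\<tau>. \<tau> \<in> convex hull {p, q, r} \<Longrightarrow> m \<bullet> \<tau> \<le> m \<bullet> p"
    using hull3_max[OF mq] by blast
  have pT: "p \<in> convex hull {p, q, r}" by (rule hull_inc) simp
  have qT: "q \<in> convex hull {p, q, r}" by (rule hull_inc) simp
  note KM = KS_max[OF finG pT t0, where u="\<lambda>g. g"]
  define x0 where "x0 = p + (\<Sum>g\<in>G. cstar m g *\<^sub>R g)"
  have x1: "x0 \<in> P" unfolding PK x0_def by (rule KM(1))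
  have x2: "x0 + (q - p) \<in> P" unfolding PK x0_def by (rule KM(3)) (use qT in auto)
  have x3: "x0 + g \<in> P" unfolding PK x0_def by (rule KM(4)) (use gG mw in auto)
  have x4: "\<And>y. y \<in> P \<Longrightarrow> m \<bullet> y \<le> m \<bullet> x0" unfolding PK x0_def by (rule KM(2))
  note x = x1 x2 x3 x4
  show ?thesis by (rule facet_span[OF convP affP mne x(1,2,3) x(4) mw nc nof])
qed

lemma N3_gen:
  fixes G :: "vec3 set" and p q r d :: vec3
  assumes finG: "finite G" and PK: "P = KS (convex hull {p, q, r}) (\<lambda>g. g) G"
    and convP: "convex P" and affP: "aff_dim P = 3"
    and nc: "\<not> collinear {0, q - p, r - p}"
    and nof: "\<And>F. F facet_of P \<Longrightarrow> \<not> plane_orth_facet d F"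
  shows "d \<notin> span {q - p, r - p}"
proof -
  define m where "m = (q - p) \<times> (r - p)"
  have mne: "m \<noteq> 0" unfolding m_def using nc by (simp add: cross_eq_0)
  have mw: "m \<bullet> (q - p) = 0" "m \<bullet> (r - p) = 0" unfolding m_def by (simp_all add: dot_cross_self inner_commute)
  have mq: "m \<bullet> q \<le> m \<bullet> p" "m \<bullet> r \<le> m \<bullet> p" using mw by (simp_all add: inner_diff_right)
  have t0: "\<And>\<tau>. \<tau> \<in> convex hull {p, q, r} \<Longrightarrow> m \<bullet> \<tau> \<le> m \<bullet> p"
    using hull3_max[OF mq] by blast
  have pT: "p \<in> convex hull {p, q, r}" by (rule hull_inc) simp
  have qT: "q \<in> convex hull {p, q, r}" by (rule hull_inc) simp
  have rT: "r \<in> convex hull {p, q, r}" by (rule hull_inc) simp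
  note KM = KS_max[OF finG pT t0, where u="\<lambda>g. g"]
  define x0 where "x0 = p + (\<Sum>g\<in>G. cstar m g *\<^sub>R g)"
  have x1: "x0 \<in> P" unfolding PK x0_def by (rule KM(1))
  have x2: "x0 + (q - p) \<in> P" unfolding PK x0_def by (rule KM(3)) (use qT in auto)
  have x3: "x0 + (r - p) \<in> P" unfolding PK x0_def by (rule KM(3)) (use rT in auto)
  have x4: "\<And>y. y \<in> P \<Longrightarrow> m \<bullet> y \<le> m \<bullet> x0" unfolding PK x0_def by (rule KM(2))
  note x = x1 x2 x3 x4
  show ?thesis by (rule facet_span[OF convP affP mne x(1,2,3) x(4) mw nc nof])
qed

lemma lin_proj: "linear (proj_plane d)"
  by (rule linearI) (simp_all add: proj_plane_def inner_add_left algebra_simps add_divide_distrib)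

lemma proj_perp: "d \<noteq> 0 \<Longrightarrow> proj_plane d x \<bullet> d = 0"
  unfolding proj_plane_def by (simp add: inner_diff_left)

lemma proj_inner: "\<psi> \<bullet> d = 0 \<Longrightarrow> \<psi> \<bullet> proj_plane d x = \<psi> \<bullet> x"
  unfolding proj_plane_def by (simp add: inner_diff_right)

lemma proj_zero:
  assumes "proj_plane d x = 0" shows "x = 0 \<or> d \<in> span {x}"
proof -
  define c where "c = (x \<bullet> d) / (d \<bullet> d)"
  have x: "x = c *\<^sub>R d" using assms unfolding proj_plane_def c_def by simp
  show ?thesis
  proof (cases "c = 0")
    case True then show ?thesis using x by simp
  next
    case False
    then have "d = (1 / c) *\<^sub>R x" using x by simp
    moreover have "x \<in> span {x}" by (rule span_base) simp
    ultimately show ?thesis using span_mul by metis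
  qed
qed

lemma in_span_of_perp_cross:
  fixes d g h :: vec3
  assumes "d \<bullet> (g \<times> h) = 0"
  shows "d \<in> span {g, h} \<or> g \<times> h = 0"
proof -
  let ?m = "g \<times> h"
  have 1: "?m \<times> (?m \<times> d) = - ((?m \<bullet> ?m) *\<^sub>R d)" using assms by (simp add: Lagrange inner_commute)
  have 2: "?m \<times> (?m \<times> d) \<in> span {g, h}"
    by (simp add: Lagrange cross_skew[of "g \<times> h"] span_diff span_mul span_base)
  show ?thesis
  proof (cases "?m = 0")
    case False
    then have "?m \<bullet> ?m \<noteq> 0" by simp
    have "d = (- 1 / (?m \<bullet> ?m)) *\<^sub>R (?m \<times> (?m \<times> d))" using 1 \<open>?m \<bullet> ?m \<noteq> 0\<close> by simp
    then show ?thesis using 2 by (metis span_mul)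
  qed simp
qed

lemma perp_span:
  fixes \<psi> d w1 w2 :: vec3
  assumes "\<psi> \<noteq> 0" "\<psi> \<bullet> d = 0" "\<psi> \<bullet> w1 = 0" "\<psi> \<bullet> w2 = 0"
  shows "d \<in> span {w1, w2} \<or> collinear {0, w1, w2}"
proof -
  obtain c where c: "w1 \<times> w2 = c *\<^sub>R \<psi>" using perp_both_cross assms(1,3,4) by blast
  have "d \<bullet> (w1 \<times> w2) = 0" using c assms(2) by (simp add: inner_commute)
  then show ?thesis using in_span_of_perp_cross cross_eq_0 by blast
qed

lemma tri_umax:
  fixes \<psi> A B C :: vec3
  assumes "\<psi> \<bullet> A \<noteq> \<psi> \<bullet> B" "\<psi> \<bullet> A \<noteq> \<psi> \<bullet> C" "\<psi> \<bullet> B \<noteq> \<psi> \<bullet> C"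
  shows "\<exists>k. umax (convex hull {A, B, C}) \<psi> k"
proof -
  consider "\<psi> \<bullet> B < \<psi> \<bullet> A \<and> \<psi> \<bullet> C < \<psi> \<bullet> A" | "\<psi> \<bullet> A < \<psi> \<bullet> B \<and> \<psi> \<bullet> C < \<psi> \<bullet> B"
    | "\<psi> \<bullet> A < \<psi> \<bullet> C \<and> \<psi> \<bullet> B < \<psi> \<bullet> C" using assms by linarith
  then show ?thesis
  proof cases
    case 1
    have "umax (convex hull {A, B, C}) \<psi> A" by (rule umax_hull) (use 1 in auto)
    then show ?thesis by blast
  next
    case 2
    have "umax (convex hull {A, B, C}) \<psi> B" by (rule umax_hull) (use 2 in auto)
    then show ?thesis by blast
  next
    case 3
    have "umax (convex hull {A, B, C}) \<psi> C" by (rule umax_hull) (use 3 in auto)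
    then show ?thesis by blast
  qed
qed

lemma minkowski_KS:
  "minkowski_sum (KS {a} (\<lambda>g. g) G) t = KS ((\<lambda>x. a + x) ` t) (\<lambda>g. g) G"
proof
  show "minkowski_sum (KS {a} (\<lambda>g. g) G) t \<subseteq> KS ((\<lambda>x. a + x) ` t) (\<lambda>g. g) G"
  proof
    fix x assume "x \<in> minkowski_sum (KS {a} (\<lambda>g. g) G) t"
    then obtain z y where x: "x = z + y" "z \<in> KS {a} (\<lambda>g. g) G" "y \<in> t" unfolding minkowski_sum_def by blast
    then obtain c where z: "z = a + (\<Sum>g\<in>G. c g *\<^sub>R g)" "\<forall>g\<in>G. 0 \<le> c g \<and> c g \<le> 1"
      unfolding KS_def by blast
    have "x = (a + y) + (\<Sum>g\<in>G. c g *\<^sub>R g)" using x(1) z(1) by (simp add: algebra_simps)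
    moreover have "a + y \<in> (\<lambda>x. a + x) ` t" using x(3) by blast
    moreover have "(a + y) + (\<Sum>g\<in>G. c g *\<^sub>R g) \<in> KS ((\<lambda>x. a + x) ` t) (\<lambda>g. g) G"
      by (rule KS_I[OF _ z(2)]) (use x(3) in blast)
    ultimately show "x \<in> KS ((\<lambda>x. a + x) ` t) (\<lambda>g. g) G" by simp
  qed
  show "KS ((\<lambda>x. a + x) ` t) (\<lambda>g. g) G \<subseteq> minkowski_sum (KS {a} (\<lambda>g. g) G) t"
  proof
    fix x assume "x \<in> KS ((\<lambda>x. a + x) ` t) (\<lambda>g. g) G"
    then obtain \<tau> c where x: "x = \<tau> + (\<Sum>g\<in>G. c g *\<^sub>R g)" "\<tau> \<in> (\<lambda>x. a + x) ` t" "\<forall>g\<in>G. 0 \<le> c g \<and> c g \<le> 1"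
      unfolding KS_def by blast
    then obtain y where y: "\<tau> = a + y" "y \<in> t" by blast
    have "a + (\<Sum>g\<in>G. c g *\<^sub>R g) \<in> KS {a} (\<lambda>g. g) G" using KS_I[of a "{a}" G c] x(3) by simp
    moreover have "x = (a + (\<Sum>g\<in>G. c g *\<^sub>R g)) + y" using x(1) y(1) by (simp add: algebra_simps)
    ultimately show "x \<in> minkowski_sum (KS {a} (\<lambda>g. g) G) t" unfolding minkowski_sum_def using y(2) by blast
  qed
qed

lemma proj_noncollinear:
  fixes d u v :: vec3
  assumes d0: "d \<noteq> 0" and ds: "d \<notin> span {u, v}" and nc: "\<not> collinear {0, u, v}"
  shows "\<not> collinear {0, proj_plane d u, proj_plane d v}"
proof
  let ?L = "proj_plane d"
  assume col: "collinear {0, ?L u, ?L v}"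
  have su: "span {u} \<subseteq> span {u, v}" "span {v} \<subseteq> span {u, v}" by (rule span_mono, blast)+
  have u0: "u \<noteq> 0" and v0: "v \<noteq> 0" using nc by (auto simp: insert_commute)
  have Lu: "?L u \<noteq> 0"
  proof
    assume "?L u = 0"
    then show False using proj_zero[of d u] u0 su ds by blast
  qed
  have Lv: "?L v \<noteq> 0"
  proof
    assume "?L v = 0"
    then show False using proj_zero[of d v] v0 su ds by blast
  qed
  obtain c where c: "?L v = c *\<^sub>R ?L u" using col Lu Lv by (auto simp: collinear_lemma)
  define \<psi> where "\<psi> = d \<times> ?L u"
  have Lud: "?L u \<bullet> d = 0" by (rule proj_perp[OF d0])
  have psi0: "\<psi> \<noteq> 0"
  proof
    assume "\<psi> = 0"
    then have "collinear {0, d, ?L u}" unfolding \<psi>_def by (simp add: cross_eq_0)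
    then obtain c' where c': "?L u = c' *\<^sub>R d" using d0 Lu by (auto simp: collinear_lemma)
    then have "c' * (d \<bullet> d) = 0" using Lud by simp
    then have "c' = 0" using d0 by simp
    then show False using c' Lu by simp
  qed
  have pd: "\<psi> \<bullet> d = 0" unfolding \<psi>_def by (simp add: dot_cross_self inner_commute)
  have pLu: "\<psi> \<bullet> ?L u = 0" unfolding \<psi>_def by (simp add: dot_cross_self)
  have pu: "\<psi> \<bullet> u = 0" using pLu proj_inner[OF pd, of u] by simp
  have pv: "\<psi> \<bullet> v = 0" using proj_inner[OF pd, of v] c pLu by simp
  from perp_span[OF psi0 pd pu pv] show False using ds nc by blast
qed


theorem lemma5p1:
  fixes Z t G :: "vec3 set" and n :: nat
  assumes "zonotope_with_gens Z G"
    and "card G = n"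
    and "aff_dim Z = 3"
    and "generic_triangle_for Z t"
  shows "equiprojective (2 * n + 3) (minkowski_sum Z t)"
proof -
  have gs: "generator_set G" and "\<exists>a. Z = (\<lambda>x. a + x) ` zonotope_gen G"
    using assms(1) unfolding zonotope_with_gens_def by auto
  then obtain a where Zeq: "Z = (\<lambda>x. a + x) ` zonotope_gen G" by blast
  have finG: "finite G" and nz: "\<And>g. g \<in> G \<Longrightarrow> g \<noteq> 0"
    and ncG: "\<And>g h. g \<in> G \<Longrightarrow> h \<in> G \<Longrightarrow> g \<noteq> h \<Longrightarrow> \<not> collinear {0, g, h}"
    using gs unfolding generator_set_def by metis+
  have "triangle t" and gen2: "\<And>u. u \<in> edge_dirs Z \<Longrightarrow> u \<notin> span (edge_dirs t)"
    using assms(4) unfolding generic_triangle_for_def by auto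
  then obtain p q r where ncol: "\<not> collinear {p, q, r}" and teq: "t = convex hull {p, q, r}"
    unfolding triangle_def by blast
  define p' where "p' = a + p"
  define q' where "q' = a + q"
  define r' where "r' = a + r"
  define P where "P = minkowski_sum Z t"
  have ZK: "Z = KS {a} (\<lambda>g. g) G" using Zeq Z_KS by simp
  have "(\<lambda>x. a + x) ` t = convex hull {p', q', r'}"
    unfolding teq convex_hull_translation[symmetric] p'_def q'_def r'_def by simp
  then have PK: "P = KS (convex hull {p', q', r'}) (\<lambda>g. g) G"
    unfolding P_def ZK minkowski_KS by simp
  have PK2: "P = KS (convex hull {p', r', q'}) (\<lambda>g. g) G" using PK by (simp add: insert_commute)
  have PK3: "P = KS (convex hull {q', r', p'}) (\<lambda>g. g) G" using PK by (simp add: insert_commute)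
  have polyP: "polytope P" unfolding PK by (rule polytope_KS[OF finG polytope_convex_hull]) simp
  have convP: "convex P" using polyP polytope_imp_convex by blast
  have affP: "aff_dim P = 3"
  proof -
    have "aff_dim P \<le> int DIM(vec3)" by (rule aff_dim_le_DIM)
    then have le: "aff_dim P \<le> 3" by simp
    have pt: "p \<in> t" unfolding teq by (rule hull_inc) simp
    have "(+) p ` Z \<subseteq> P"
    proof
      fix x assume "x \<in> (+) p ` Z"
      then obtain z where z: "z \<in> Z" "x = p + z" by blast
      then have "x = z + p" by (simp add: add.commute)
      then show "x \<in> P" unfolding P_def minkowski_sum_def using pt z(1) by blast
    qed
    then have "aff_dim ((+) p ` Z) \<le> aff_dim P" by (rule aff_dim_subset)
    then have "aff_dim P \<ge> 3" using assms(3) by (simp add: aff_dim_translation_eq)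
    then show ?thesis using le by simp
  qed
  have ncol': "\<not> collinear {0, q - p, r - p}"
  proof -
    have "collinear {q, p, r} \<longleftrightarrow> collinear {0, q - p, r - p}" by (rule collinear_3) (simp add: NO_MATCH_def)
    then show ?thesis using ncol by (simp add: insert_commute)
  qed
  have ngp: "\<not> collinear {0, e, g}" if e: "\<exists>w\<in>edge_dirs t. \<exists>c. c \<noteq> 0 \<and> e = c *\<^sub>R w" and gG: "g \<in> G" for e g
  proof
    assume col: "collinear {0, e, g}"
    obtain w c where w: "w \<in> edge_dirs t" "c \<noteq> 0" "e = c *\<^sub>R w" using e by blast
    have "norm w = 1" using w(1) unfolding edge_dirs_def edge_direction_def by blast
    then have "w \<noteq> 0" by auto
    then have e0: "e \<noteq> 0" using w by simp
    obtain wg cg where wg: "wg \<in> edge_dirs Z" "cg \<noteq> 0" "g = cg *\<^sub>R wg"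
      using zono_edge[OF gs gG Zeq] by blast
    have g0: "g \<noteq> 0" using nz gG by blast
    obtain l where l: "g = l *\<^sub>R e" using col e0 g0 by (auto simp: collinear_lemma)
    have "cg *\<^sub>R wg = (l * c) *\<^sub>R w" using wg(3) l w(3) by simp
    then have "(1 / cg) *\<^sub>R (cg *\<^sub>R wg) = (1 / cg) *\<^sub>R ((l * c) *\<^sub>R w)" by simp
    then have "wg = ((l * c) / cg) *\<^sub>R w" using wg(2) by simp
    moreover have "w \<in> span (edge_dirs t)" using w(1) by (rule span_base)
    ultimately have "wg \<in> span (edge_dirs t)" by (simp add: span_mul)
    then show False using gen2 wg(1) by blast
  qed
  have tqp: "\<exists>w\<in>edge_dirs t. \<exists>c. c \<noteq> 0 \<and> q - p = c *\<^sub>R w" unfolding teq by (rule tri_edge[OF ncol])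
  have trp: "\<exists>w\<in>edge_dirs t. \<exists>c. c \<noteq> 0 \<and> r - p = c *\<^sub>R w"
  proof -
    have "\<not> collinear {p, r, q}" using ncol by (simp add: insert_commute)
    from tri_edge[OF this] show ?thesis unfolding teq by (simp add: insert_commute)
  qed
  have trq: "\<exists>w\<in>edge_dirs t. \<exists>c. c \<noteq> 0 \<and> r - q = c *\<^sub>R w"
  proof -
    have "\<not> collinear {q, r, p}" using ncol by (simp add: insert_commute)
    from tri_edge[OF this] show ?thesis unfolding teq by (simp add: insert_commute)
  qed
  have qp: "q' - p' = q - p" "r' - p' = r - p" "r' - q' = r - q" unfolding p'_def q'_def r'_def by simp_all
  show ?thesis
    unfolding equiprojective_def P_def[symmetric] Let_def
  proof (rule conjI[OF polyP conjI[OF affP]], intro allI impI)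
    fix d :: vec3
    assume dass: "d \<noteq> 0 \<and> (\<forall>F. F facet_of P \<longrightarrow> \<not> plane_orth_facet d F)"
    then have d0: "d \<noteq> 0" and nof: "\<And>F. F facet_of P \<Longrightarrow> \<not> plane_orth_facet d F" by auto
    have N1: "d \<notin> span {g, h}" if "g \<in> G" "h \<in> G" "g \<noteq> h" for g h
      by (rule N1_gen[OF finG PK convP affP that(1,2) ncG[OF that] nof])
    have N2a: "d \<notin> span {q - p, g}" if "g \<in> G" for g
      using N2_gen[OF finG PK convP affP that _ nof] ngp[OF tqp that] qp by simp
    have N2b: "d \<notin> span {r - p, g}" if "g \<in> G" for g
      using N2_gen[OF finG PK2 convP affP that _ nof] ngp[OF trp that] qp by simp
    have N2c: "d \<notin> span {r - q, g}" if "g \<in> G" for g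
      using N2_gen[OF finG PK3 convP affP that _ nof] ngp[OF trq that] qp by simp
    have N3: "d \<notin> span {q - p, r - p}"
      using N3_gen[OF finG PK convP affP _ nof] ncol' qp by simp
    define L where "L = proj_plane d"
    define A where "A = L p'"
    define B where "B = L q'"
    define C where "C = L r'"
    define T where "T = convex hull {A, B, C}"
    have linL: "linear L" unfolding L_def by (rule lin_proj)
    have LT: "L ` (convex hull {p', q', r'}) = T"
      unfolding T_def A_def B_def C_def convex_hull_linear_image[OF linL] by simp
    have QK: "L ` P = KS T (\<lambda>g. L g) G" unfolding PK KS_linear_image[OF linL] LT ..
    have Ldiff: "L x - L y = L (x - y)" for x y using linL by (simp add: linear_diff)
    have pinner: "\<psi> \<bullet> L x = \<psi> \<bullet> x" if "\<psi> \<bullet> d = 0" for \<psi> x unfolding L_def by (rule proj_inner[OF that])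
    have Lperp: "L x \<bullet> d = 0" for x unfolding L_def by (rule proj_perp[OF d0])
    have BA: "B - A = L (q - p)" and CA: "C - A = L (r - p)" and CB: "C - B = L (r - q)"
      unfolding A_def B_def C_def Ldiff qp[symmetric] by simp_all
    have ncT: "\<not> collinear {A, B, C}"
    proof -
      have "\<not> collinear {0, L (q - p), L (r - p)}"
        unfolding L_def by (rule proj_noncollinear[OF d0 N3 ncol'])
      moreover have "collinear {B, A, C} \<longleftrightarrow> collinear {0, B - A, C - A}"
        by (rule collinear_3) (simp add: NO_MATCH_def)
      ultimately show ?thesis unfolding BA CA by (simp add: insert_commute)
    qed
    have indT: "\<not> affine_dependent {A, B, C}" and dist: "A \<noteq> B" "A \<noteq> C" "B \<noteq> C"
      using ncT unfolding collinear_3_eq_affine_dependent[of A B C] by simp_all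
    have polyT: "polytope T" unfolding T_def by (rule polytope_convex_hull) simp
    have TH: "T \<subseteq> {x. x \<bullet> d = 0}"
    proof -
      have "T = L ` (convex hull {p', q', r'})" using LT by simp
      then show ?thesis using Lperp by auto
    qed
    have extT: "{x. x extreme_point_of T} = {A, B, C}"
      unfolding T_def extreme_point_of_convex_hull_affine_independent[OF indT] by auto
    have cardT: "card {x. x extreme_point_of T} = 3" unfolding extT using dist by simp
    have ug: "L g \<bullet> d = 0 \<and> L g \<noteq> 0" if gG: "g \<in> G" for g
    proof
      show "L g \<bullet> d = 0" by (rule Lperp)
      show "L g \<noteq> 0"
      proof
        assume "L g = 0"
        then have "g = 0 \<or> d \<in> span {g}" unfolding L_def by (rule proj_zero)
        moreover have "span {g} \<subseteq> span {q - p, g}" by (rule span_mono) blast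
        ultimately show False using nz[OF gG] N2a[OF gG] by blast
      qed
    qed
    have hyp: "(\<forall>h\<in>G. h \<noteq> g \<longrightarrow> \<psi> \<bullet> L h \<noteq> 0) \<and> (\<exists>k. umax T \<psi> k)"
      if gG: "g \<in> G" and pd: "\<psi> \<bullet> d = 0" and pg: "\<psi> \<bullet> L g = 0" and p0: "\<psi> \<noteq> 0" for g \<psi>
    proof
      have pg': "\<psi> \<bullet> g = 0" using pg pinner[OF pd] by simp
      show "\<forall>h\<in>G. h \<noteq> g \<longrightarrow> \<psi> \<bullet> L h \<noteq> 0"
      proof (intro ballI impI)
        fix h assume h: "h \<in> G" "h \<noteq> g"
        show "\<psi> \<bullet> L h \<noteq> 0"
        proof
          assume "\<psi> \<bullet> L h = 0"
          then have "\<psi> \<bullet> h = 0" using pinner[OF pd] by simp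
          from perp_span[OF p0 pd pg' this] show False using N1[OF gG h(1)] ncG[OF gG h(1)] h(2) by auto
        qed
      qed
      have ne: "\<psi> \<bullet> e \<noteq> 0" if "d \<notin> span {e, g}" "\<not> collinear {0, e, g}" for e
      proof
        assume "\<psi> \<bullet> e = 0"
        from perp_span[OF p0 pd this pg'] show False using that by blast
      qed
      have e1: "\<psi> \<bullet> (q - p) \<noteq> 0" by (rule ne[OF N2a[OF gG] ngp[OF tqp gG]])
      have e2: "\<psi> \<bullet> (r - p) \<noteq> 0" by (rule ne[OF N2b[OF gG] ngp[OF trp gG]])
      have e3: "\<psi> \<bullet> (r - q) \<noteq> 0" by (rule ne[OF N2c[OF gG] ngp[OF trq gG]])
      have "\<psi> \<bullet> B - \<psi> \<bullet> A \<noteq> 0" using e1 BA pinner[OF pd] by (simp flip: inner_diff_right)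
      moreover have "\<psi> \<bullet> C - \<psi> \<bullet> A \<noteq> 0" using e2 CA pinner[OF pd] by (simp flip: inner_diff_right)
      moreover have "\<psi> \<bullet> C - \<psi> \<bullet> B \<noteq> 0" using e3 CB pinner[OF pd] by (simp flip: inner_diff_right)
      ultimately show "\<exists>k. umax T \<psi> k" unfolding T_def by (intro tri_umax) auto
    qed
    have main: "polytope (KS T (\<lambda>g. L g) G) \<and> KS T (\<lambda>g. L g) G \<subseteq> {x. x \<bullet> d = 0} \<and>
         card {x. x extreme_point_of (KS T (\<lambda>g. L g) G)} = 3 + 2 * card G \<and>
         (\<forall>\<psi>. (\<forall>g\<in>G. \<psi> \<bullet> L g \<noteq> 0) \<longrightarrow> (\<exists>k. umax T \<psi> k) \<longrightarrow> (\<exists>k. umax (KS T (\<lambda>g. L g) G) \<psi> k))"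
      by (rule KS_induct[OF finG polyT TH cardT d0 ug hyp subset_refl]) auto
    have QH: "L ` P \<subseteq> {x. d \<bullet> x = 0}" using main QK by (auto simp: inner_commute)
    have "aff_dim (L ` P) \<le> aff_dim {x. d \<bullet> x = 0}" using QH by (rule aff_dim_subset)
    then have le2: "aff_dim (L ` P) \<le> 2" using aff_dim_hyperplane[OF d0, of 0] by simp
    have "T \<subseteq> L ` P" unfolding QK using KS_sub by blast
    then have "aff_dim T \<le> aff_dim (L ` P)" by (rule aff_dim_subset)
    moreover have "aff_dim T = 2"
    proof -
      have "of_nat (card {A, B, C}) = aff_dim {A, B, C} + 1" by (rule aff_dim_affine_independent[OF indT])
      then have "aff_dim {A, B, C} = 2" using dist by simp
      then show ?thesis unfolding T_def by (simp add: aff_dim_convex_hull)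
    qed
    ultimately have aff2: "aff_dim (L ` P) = 2" using le2 by simp
    show "polytope (proj_plane d ` P) \<and> aff_dim (proj_plane d ` P) = 2 \<and>
          card {v. v extreme_point_of proj_plane d ` P} = 2 * n + 3"
    proof -
      have "polytope (L ` P)" "card {v. v extreme_point_of L ` P} = 3 + 2 * card G"
        unfolding QK using main by auto
      then show ?thesis using aff2 assms(2) unfolding L_def by simp
    qed
  qed
qed

end
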